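(* Let $\mathcal H$ be a real Hilbert space, let $\beta\in\left]0,+\infty\right[$, let $\varepsilon\in\left]0,\min\{1/2,\beta\}\right[$, let $x_0\in\mathcal H$, let $f\colon\mathcal H\to\left]-\infty,+\infty\right]$ be proper, lower semicontinuous and convex, let $g\colon\mathcal H\to\mathbb R$ be convex and differentiable with a $1/\beta$-Lipschitz gradient, and suppose that the set $S$ of solutions to the problem of minimizing $f(x)+g(x)$ over $x\in\mathcal H$ is nonempty. Let $(\gamma_n)_{n\in\mathbb N}$ be a sequence in $\left[\varepsilon,2\beta/(1+\varepsilon)\right]$, and let $(a_n)_{n\in\mathbb N}$ and $(b_n)_{n\in\mathbb N}$ be sequences in $\mathcal H$ such that $\sum_{n\in\mathbb N}\|a_n\|<+\infty$ and $\sum_{n\in\mathbb N}\|b_n\|<+\infty$. For every $n\in\mathbb N$, let $\lambda_n\in\left[\varepsilon,(1-\varepsilon)(2+\varepsilon-\gamma_n/(2\beta))\right]$ and set $$x_{n+1}=x_n+\lambda_n\Big(\mathrm{prox}_{\gamma_n f}\big(x_n-\gamma_n(\nabla g(x_n)+b_n)\big)+a_n-x_n\Big).$$ Then: (i) $\sum_{n\in\mathbb N}\|\mathrm{prox}_{\gamma_n f}(x_n-\gamma_n\nabla g(x_n))-x_n\|^2<+\infty$; (ii) for every $x\in S$, $\sum_{n\in\mathbb N}\|\nabla g(x_n)-\nabla g(x)\|^2<+\infty$; (iii) $(x_n)_{n\in\mathbb N}$ converges weakly to a point in $S$; (iv) if $\partial f$ is demiregular at every point in $S$, or $\nabla g$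 is demiregular at every point in $S$, or $\mathrm{int}\,S\neq\varnothing$, then $(x_n)_{n\in\mathbb N}$ converges strongly to a point in $S$.
   Context: For a proper lower semicontinuous convex $h$ and $x\in\mathcal H$, $\mathrm{prox}_h x$ is the unique minimizer of $h+\frac12\|x-\cdot\|^2$. $\partial f(x)=\{u\in\mathcal H\mid (\forall y)\ \langle y-x,u\rangle+f(x)\leq f(y)\}$ is the subdifferential. An operator $C\colon\mathcal H\to2^{\mathcal H}$ is demiregular at $x\in\mathrm{dom}\,C$ if for every sequence $((x_n,u_n))_{n\in\mathbb N}$ with $u_n\in Cx_n$ and every $u\in Cx$ such that $x_n\rightharpoonup x$ (weakly) and $u_n\to u$ (strongly), one has $x_n\to x$. $\mathrm{int}$ denotes interior. *)

theory Defs
  imports "HOL-Analysis.Analysis"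
begin

text \<open>Extended-real valued functions f : H \<Rightarrow> ]-\<infinity>,+\<infinity>] are modelled as
  functions into ereal that never take the value -\<infinity>.\<close>

definition proper_fun :: "('a \<Rightarrow> ereal) \<Rightarrow> bool" where
  "proper_fun f \<longleftrightarrow> (\<forall>x. f x \<noteq> -\<infinity>) \<and> (\<exists>x. f x \<noteq> \<infinity>)"

definition lsc_fun :: "('a::topological_space \<Rightarrow> ereal) \<Rightarrow> bool" where
  "lsc_fun f \<longleftrightarrow> (\<forall>c::ereal. closed {x. f x \<le> c})"

definition convex_fun :: "('a::real_vector \<Rightarrow> ereal) \<Rightarrow> bool" where
  "convex_fun f \<longleftrightarrow> (\<forall>x y t. 0 < t \<and> t < 1 \<longrightarrow>
      f (t *\<^sub>R x + (1 - t) *\<^sub>R y) \<le> ereal t * f x + ereal (1 - t) * f y)"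

definition prox :: "('a::real_normed_vector \<Rightarrow> ereal) \<Rightarrow> 'a \<Rightarrow> 'a" where
  "prox h x = (THE p. \<forall>y. h p + ereal ((1/2) * (norm (x - p))\<^sup>2)
                          \<le> h y + ereal ((1/2) * (norm (x - y))\<^sup>2))"

definition subdiff :: "('a::real_inner \<Rightarrow> ereal) \<Rightarrow> 'a \<Rightarrow> 'a set" where
  "subdiff f x = {u. \<forall>y. ereal (inner (y - x) u) + f x \<le> f y}"

definition weakly_converges :: "(nat \<Rightarrow> 'a::real_inner) \<Rightarrow> 'a \<Rightarrow> bool" where
  "weakly_converges xs x \<longleftrightarrow> (\<forall>y. (\<lambda>n. inner (xs n) y) \<longlonglongrightarrow> inner x y)"

definition demiregular_at :: "('a::real_inner \<Rightarrow> 'a set) \<Rightarrow> 'a \<Rightarrow> bool" where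
  "demiregular_at C x \<longleftrightarrow> C x \<noteq> {} \<and>
     (\<forall>xs us u. (\<forall>n. us n \<in> C (xs n)) \<and> u \<in> C x \<and> weakly_converges xs x \<and> us \<longlonglongrightarrow> u
        \<longrightarrow> xs \<longlonglongrightarrow> x)"

end

theory Submission
  imports Defs "HOL-Library.Diagonal_Subsequence"
begin


lemma min_strongly_convex:
  fixes F :: "'a::{real_inner,complete_space} \<Rightarrow> real" and D :: "'a set"
  assumes Dne: "D \<noteq> {}" and lb: "\<And>w. w\<in>D \<Longrightarrow> F w \<ge> lbd"
    and cl: "\<And>c. closed {w\<in>D. F w \<le> c}"
    and mid: "\<And>u v. u\<in>D \<Longrightarrow> v\<in>D \<Longrightarrow> (1/2)*\<^sub>R(u+v) \<in> D \<and>
                 F((1/2)*\<^sub>R(u+v)) \<le> (F u + F v)/2 - (norm(u-v))\<^sup>2/8"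
  shows "\<exists>u\<in>D. \<forall>w\<in>D. F u \<le> F w"
proof -
  define m where "m = Inf (F ` D)"
  have bdd: "bdd_below (F ` D)" unfolding bdd_below_def using lb by auto
  have mle: "\<And>w. w \<in> D \<Longrightarrow> m \<le> F w" unfolding m_def using bdd by (simp add: cInf_lower)
  have "\<forall>n::nat. \<exists>u\<in>D. F u < m + 1/(real n+1)"
  proof
    fix n::nat
    have "Inf (F ` D) < m + 1/(real n+1)" unfolding m_def by simp
    then obtain y where "y \<in> F ` D" "y < m + 1/(real n+1)"
      using cInf_lessD Dne by (metis image_is_empty)
    then show "\<exists>u\<in>D. F u < m + 1/(real n+1)" by auto
  qed
  then obtain u where uD: "\<And>n. u n \<in> D" and uF: "\<And>n. F (u n) < m + 1/(real n+1)"
    by metis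
  have dist_bd: "(norm (u n - u k))\<^sup>2 \<le> 4*(1/(real n+1) + 1/(real k+1))" for n k
  proof -
    have "m \<le> F ((1/2)*\<^sub>R(u n + u k))" using mid[OF uD uD] mle by blast
    also have "\<dots> \<le> (F (u n) + F (u k))/2 - (norm(u n-u k))\<^sup>2/8" using mid[OF uD uD] by blast
    finally have h: "m \<le> (F (u n) + F (u k))/2 - (norm(u n-u k))\<^sup>2/8" .
    define A where "A = 1/(real n+1)"
    define B where "B = 1/(real k+1)"
    have "F (u n) < m + A" "F (u k) < m + B" using uF[of n] uF[of k] unfolding A_def B_def by auto
    then show ?thesis using h unfolding A_def[symmetric] B_def[symmetric] by argo
  qed
  have "Cauchy u"
  proof (rule metric_CauchyI)
    fix e :: real assume e: "0 < e"
    obtain N::nat where N: "8/(e^2) < real N" using reals_Archimedean2 by blast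
    show "\<exists>M. \<forall>n\<ge>M. \<forall>k\<ge>M. dist (u n) (u k) < e"
    proof (intro exI allI impI)
      fix n k assume nk: "N \<le> n" "N \<le> k"
      have e2: "0 < e^2" using e by simp
      have "1/(real n+1) \<le> 1/(real N+1)" using nk by (simp add: frac_le)
      moreover have "1/(real k+1) \<le> 1/(real N+1)" using nk by (simp add: frac_le)
      moreover have "8/(real N+1) = 8*(1/(real N+1))" by simp
      ultimately have "(norm (u n - u k))\<^sup>2 \<le> 8/(real N+1)" using dist_bd[of n k] by argo
      also have "8/(real N+1) < e^2"
      proof -
        have "8 < e^2 * real N" using N e2 by (simp add: field_simps)
        moreover have "e^2*(real N+1) = e^2*real N + e^2" by (simp add: algebra_simps)
        ultimately have "8 < e^2 * (real N + 1)" using e2 by argo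
        then show ?thesis by (simp add: field_simps)
      qed
      finally have "(norm (u n - u k))\<^sup>2 < e^2" .
      then have "norm (u n - u k) < e" using e by (simp add: power_less_imp_less_base)
      then show "dist (u n) (u k) < e" by (simp add: dist_norm)
    qed
  qed
  then obtain z where z: "u \<longlonglongrightarrow> z" using Cauchy_convergent_iff convergent_def by blast
  have zc: "z \<in> D \<and> F z \<le> c" if c: "c > m" for c
  proof -
    obtain N::nat where N: "1/(c-m) < real N" using reals_Archimedean2 by blast
    have "\<forall>n. u (n+N) \<in> {w\<in>D. F w \<le> c}"
    proof
      fix n
      have cm: "0 < c - m" using c by simp
      have "1/(c-m) < real (n+N) + 1" using N by simp
      then have "1/(real (n+N)+1) < c - m" using cm
        by (metis add_pos_pos divide_less_eq mult.commute of_nat_0_le_iff zero_less_one order_le_less_trans less_add_one)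
      then show "u (n+N) \<in> {w\<in>D. F w \<le> c}" using uF[of "n+N"] uD[of "n+N"] by auto
    qed
    moreover have "(\<lambda>n. u (n+N)) \<longlonglongrightarrow> z" using z by (rule LIMSEQ_ignore_initial_segment)
    ultimately have "z \<in> {w\<in>D. F w \<le> c}" using closed_sequentially[OF cl[of c], of "\<lambda>n. u (n+N)" z] by blast
    then show ?thesis by simp
  qed
  have zD: "z \<in> D" using zc[of "m+1"] by simp
  have "F z \<le> m"
  proof (rule field_le_epsilon)
    fix e::real assume "0 < e" then show "F z \<le> m + e" using zc[of "m+e"] by simp
  qed
  then show ?thesis using zD mle by (meson order_trans)
qed


lemma quasi_fejer_conv:
  fixes u e :: "nat \<Rightarrow> real"
  assumes u0: "\<And>n. 0 \<le> u n" and e0: "\<And>n. 0 \<le> e n" and es: "summable e"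
    and step: "\<And>n. u (Suc n) \<le> u n + e n"
  shows "convergent u"
proof -
  define v where "v n = u n - (\<Sum>k<n. e k)" for n
  have dec: "decseq v"
  proof (rule decseq_SucI)
    fix n show "v (Suc n) \<le> v n" using step[of n] unfolding v_def by simp
  qed
  have sle: "(\<Sum>k<n. e k) \<le> suminf e" for n by (rule sum_le_suminf[OF es]) (auto intro: e0)
  have "v n \<ge> - suminf e" for n using sle[of n] u0[of n] unfolding v_def by linarith
  moreover have "v n \<le> v 0" for n using dec by (simp add: decseq_def)
  moreover have "0 \<le> suminf e" using es e0 by (simp add: suminf_nonneg)
  ultimately have "\<bar>v n\<bar> \<le> suminf e + \<bar>v 0\<bar>" for n
  proof -
    assume h: "\<And>n. - suminf e \<le> v n" "\<And>n. v n \<le> v 0" "0 \<le> suminf e"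
    have "v n \<le> suminf e + \<bar>v 0\<bar>" using h(2)[of n] h(3) abs_ge_self[of "v 0"] by linarith
    moreover have "- v n \<le> suminf e + \<bar>v 0\<bar>" using h(1)[of n] abs_ge_zero[of "v 0"] by linarith
    ultimately show ?thesis by (simp add: abs_le_iff)
  qed
  then have "Bseq v" by (intro BseqI') auto
  then have "convergent v" using dec by (intro Bseq_monoseq_convergent) (simp_all add: monoseq_iff)
  moreover have "convergent (\<lambda>n. \<Sum>k<n. e k)" using es summable_LIMSEQ convergent_def by blast
  ultimately have "convergent (\<lambda>n. v n + (\<Sum>k<n. e k))" by (rule convergent_add)
  then show ?thesis unfolding v_def by simp
qed

lemma telescope_summable:
  fixes a c d :: "nat \<Rightarrow> real"
  assumes a0: "\<And>n. 0 \<le> a n" and c0: "\<And>n. 0 \<le> c n" and d0: "\<And>n. 0 \<le> d n" and ds: "summable d"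
    and step: "\<And>n. a (Suc n) \<le> a n - c n + d n"
  shows "summable c"
proof (rule summableI_nonneg_bounded[where x="a 0 + suminf d"])
  fix n show "0 \<le> c n" by (rule c0)
  have "(\<Sum>k<n. c k) \<le> a 0 - a n + (\<Sum>k<n. d k)"
  proof (induction n)
    case 0 then show ?case by simp
  next
    case (Suc n) then show ?case using step[of n] by simp
  qed
  moreover have "(\<Sum>k<n. d k) \<le> suminf d" by (rule sum_le_suminf[OF ds]) (auto intro: d0)
  ultimately show "(\<Sum>k<n. c k) \<le> a 0 + suminf d" using a0[of n] by linarith
qed

lemma aux_lin3: "(X::real) \<le> e \<Longrightarrow> Y \<le> X \<Longrightarrow> b - Y \<le> a \<Longrightarrow> b \<le> a + e" by linarith

lemma small_t_le:
  fixes a b c :: real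
  assumes "\<And>t. 0 < t \<Longrightarrow> t < 1 \<Longrightarrow> b - t * c \<le> a"
  shows "b \<le> a"
proof (rule field_le_epsilon)
  fix e :: real assume e: "0 < e"
  define t where "t = min (1/2) (e / (\<bar>c\<bar> + 1))"
  have t: "0 < t" "t < 1" using e by (auto simp: t_def)
  have q: "\<bar>c\<bar> / (\<bar>c\<bar> + 1) \<le> 1" by simp
  have "t * \<bar>c\<bar> \<le> (e / (\<bar>c\<bar> + 1)) * \<bar>c\<bar>" using t unfolding t_def by (intro mult_right_mono) auto
  also have "\<dots> = e * (\<bar>c\<bar> / (\<bar>c\<bar> + 1))" by simp
  also have "\<dots> \<le> e * 1" using e q by (intro mult_left_mono) auto
  finally have X: "t * \<bar>c\<bar> \<le> e" by simp
  have Y: "t * c \<le> t * \<bar>c\<bar>" using t by (intro mult_left_mono) auto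
  have Z: "b - t * c \<le> a" using assms[OF t] .
  from X Y Z show "b \<le> a + e" by (rule aux_lin3)
qed

lemma quad_zero:
  fixes a b :: real
  assumes "\<And>t. 0 \<le> t * a + t\<^sup>2 * b"
  shows "a = 0"
proof -
  define s where "s = 1 / (\<bar>b\<bar> + 1)"
  have s0: "0 < s" unfolding s_def by simp
  define t where "t = - (a * s)"
  have h: "0 \<le> t * a + t\<^sup>2 * b" by (rule assms)
  have eq: "t * a + t\<^sup>2 * b = a\<^sup>2 * s * (s * b - 1)" unfolding t_def by (simp add: power2_eq_square algebra_simps)
  have "s * b \<le> s * \<bar>b\<bar>" using s0 by (simp add: mult_left_mono)
  also have "s * \<bar>b\<bar> < 1" unfolding s_def by (simp add: field_simps)
  finally have sb: "s * b - 1 < 0" by simp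
  from h eq have "0 \<le> a\<^sup>2 * s * (s * b - 1)" by simp
  then have "a\<^sup>2 * s \<le> 0" using sb by (auto simp: zero_le_mult_iff)
  then have "a\<^sup>2 \<le> 0" using s0 by (simp add: mult_le_0_iff)
  then show ?thesis by simp
qed

lemma not_tendsto_subseq:
  fixes u :: "nat \<Rightarrow> real"
  assumes "\<not> u \<longlonglongrightarrow> l"
  shows "\<exists>d>0. \<exists>s::nat\<Rightarrow>nat. strict_mono s \<and> (\<forall>k. d \<le> \<bar>u (s k) - l\<bar>)"
proof -
  from assms obtain d where d: "d > 0" "\<not> eventually (\<lambda>n. dist (u n) l < d) sequentially"
    unfolding tendsto_iff by blast
  have "\<forall>N. \<exists>n\<ge>N. d \<le> \<bar>u n - l\<bar>" using d(2) unfolding eventually_sequentially dist_real_def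
    by (simp add: not_less)
  then have inf: "infinite {n. d \<le> \<bar>u n - l\<bar>}" by (simp add: infinite_nat_iff_unbounded_le)
  define s where "s = enumerate {n. d \<le> \<bar>u n - l\<bar>}"
  have sm: "strict_mono s" unfolding s_def using inf by (rule strict_mono_enumerate)
  have sk: "\<forall>k. d \<le> \<bar>u (s k) - l\<bar>"
  proof
    fix k show "d \<le> \<bar>u (s k) - l\<bar>" using enumerate_in_set[OF inf, of k] unfolding s_def by simp
  qed
  have "strict_mono s \<and> (\<forall>k. d \<le> \<bar>u (s k) - l\<bar>)" using sm sk by (rule conjI)
  then have "\<exists>s::nat\<Rightarrow>nat. strict_mono s \<and> (\<forall>k. d \<le> \<bar>u (s k) - l\<bar>)"
    by (rule exI[where x=s])
  then show ?thesis using d(1) by (intro exI[of _ d] conjI)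
qed

lemma dq_limit:
  fixes g :: "'a::real_inner \<Rightarrow> real"
  assumes "(g has_derivative (\<lambda>h. inner v h)) (at x)"
  shows "((\<lambda>t. (g (x + t *\<^sub>R h) - g x) / t) \<longlongrightarrow> inner v h) (at_right 0)"
proof -
  have l: "((\<lambda>t. x + t *\<^sub>R h) has_derivative (\<lambda>t. t *\<^sub>R h)) (at 0)"
    by (auto intro!: derivative_eq_intros)
  have g0: "(g has_derivative (\<lambda>h. inner v h)) (at (x + 0 *\<^sub>R h))" using assms by simp
  have "((\<lambda>t. g (x + t *\<^sub>R h)) has_derivative (\<lambda>t. inner v (t *\<^sub>R h))) (at 0)"
    using has_derivative_compose[OF l g0] by (simp add: o_def)
  then have "((\<lambda>t. g (x + t *\<^sub>R h)) has_derivative (\<lambda>t. t * inner v h)) (at 0)" by simp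
  then have "((\<lambda>t. g (x + t *\<^sub>R h)) has_real_derivative inner v h) (at 0)"
    by (simp add: has_field_derivative_def mult.commute[of _ "inner v h"])
  then have "((\<lambda>t. (g (x + (0 + t) *\<^sub>R h) - g (x + 0 *\<^sub>R h)) / t) \<longlongrightarrow> inner v h) (at 0)"
    by (simp add: DERIV_def)
  then have "((\<lambda>t. (g (x + t *\<^sub>R h) - g x) / t) \<longlongrightarrow> inner v h) (at 0)" by simp
  then show ?thesis by (rule filterlim_mono) (auto simp: at_le)
qed


lemma subspace_closure_rv:
  fixes S :: "'a::real_normed_vector set"
  assumes "subspace S" shows "subspace (closure S)"
  unfolding subspace_def
proof (intro conjI ballI allI)
  show "0 \<in> closure S" using assms by (simp add: subspace_0 closure_subset[THEN subsetD])
next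
  fix u v assume u: "u \<in> closure S" and v: "v \<in> closure S"
  obtain a where a: "\<And>n. a n \<in> S" "a \<longlonglongrightarrow> u" using u closure_sequential by metis
  obtain b where b: "\<And>n. b n \<in> S" "b \<longlonglongrightarrow> v" using v closure_sequential by metis
  have "(\<lambda>n. a n + b n) \<longlonglongrightarrow> u + v" using a b by (intro tendsto_add) auto
  moreover have "\<forall>n. a n + b n \<in> S" using a b assms by (simp add: subspace_add)
  ultimately show "u + v \<in> closure S" unfolding closure_sequential by (intro exI[of _ "\<lambda>n. a n + b n"]) simp
next
  fix c :: real and u assume u: "u \<in> closure S"
  obtain a where a: "\<And>n. a n \<in> S" "a \<longlonglongrightarrow> u" using u closure_sequential by metis
  have "(\<lambda>n. c *\<^sub>R a n) \<longlonglongrightarrow> c *\<^sub>R u" using a by (intro tendsto_scaleR) auto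
  moreover have "\<forall>n. c *\<^sub>R a n \<in> S" using a assms by (simp add: subspace_scale)
  ultimately show "c *\<^sub>R u \<in> closure S" unfolding closure_sequential by (intro exI[of _ "\<lambda>n. c *\<^sub>R a n"]) simp
qed

lemma para_half:
  fixes a b :: "'a::real_inner"
  shows "(norm ((1/2) *\<^sub>R (a + b)))\<^sup>2 = (norm a)\<^sup>2/2 + (norm b)\<^sup>2/2 - (norm (a - b))\<^sup>2/4"
  by (simp add: power2_norm_eq_inner inner_add_left inner_add_right inner_diff_left inner_diff_right
      inner_commute algebra_simps) argo

lemma norm_add_sq:
  fixes a b :: "'a::real_inner"
  shows "(norm (a + b))\<^sup>2 = (norm a)\<^sup>2 + 2 * inner a b + (norm b)\<^sup>2"
  by (simp add: power2_norm_eq_inner inner_add_left inner_add_right inner_commute)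

lemma norm_diff_sq:
  fixes a b :: "'a::real_inner"
  shows "(norm (a - b))\<^sup>2 = (norm a)\<^sup>2 - 2 * inner a b + (norm b)\<^sup>2"
  by (simp add: power2_norm_eq_inner inner_diff_left inner_diff_right inner_commute)

lemma half_half: "(1/2) *\<^sub>R v + (1/2) *\<^sub>R v = (v::'a::real_vector)"
  by (metis scaleR_add_left field_sum_of_halves scaleR_one)

lemma aux_lin1: "(D::real) = (A/2 + B/2 - C/4)/2 \<Longrightarrow> D \<le> (A/2 + B/2)/2 - C/8" by argo

lemma aux_lin2: "(a::real) \<le> b \<Longrightarrow> b = a - 2 * (t * i) + Y \<Longrightarrow> 0 \<le> t * (- 2 * i) + Y"
  by (simp add: algebra_simps)

lemma projection_exists:
  fixes M :: "'a::{real_inner,complete_space} set"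
  assumes sub: "subspace M" and cl: "closed M"
  shows "\<exists>m\<in>M. \<forall>w\<in>M. inner (v - m) w = 0"
proof -
  define F where "F w = (norm (v - w))\<^sup>2 / 2" for w
  have "\<exists>u\<in>M. \<forall>w\<in>M. F u \<le> F w"
  proof (rule min_strongly_convex[where lbd=0])
    show "M \<noteq> {}" using sub subspace_0 by blast
    show "\<And>w. w \<in> M \<Longrightarrow> 0 \<le> F w" unfolding F_def by simp
    fix c
    have "continuous_on UNIV F" unfolding F_def by (intro continuous_intros) auto
    then have "closed {w. F w \<le> c}" by (intro closed_Collect_le) (auto intro: continuous_on_const)
    then have "closed (M \<inter> {w. F w \<le> c})" using cl by (intro closed_Int)
    then show "closed {w \<in> M. F w \<le> c}" by (simp add: Collect_conj_eq)
  next
    fix u w assume u: "u \<in> M" and w: "w \<in> M"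
    have "(1/2) *\<^sub>R (u + w) \<in> M" using u w sub by (simp add: subspace_add subspace_scale)
    moreover have e0: "v - (1/2) *\<^sub>R (u + w) = (1/2) *\<^sub>R ((v - u) + (v - w))" by (simp add: algebra_simps half_half)
    have e1: "norm ((v - u) - (v - w)) = norm (u - w)" by (simp add: norm_minus_commute)
    have "F ((1/2) *\<^sub>R (u + w)) = ((norm (v - u))\<^sup>2/2 + (norm (v - w))\<^sup>2/2 - (norm (u - w))\<^sup>2/4) / 2"
      by (simp only: F_def e0 para_half e1)
    then have "F ((1/2) *\<^sub>R (u + w)) \<le> (F u + F w)/2 - (norm (u - w))\<^sup>2/8"
      unfolding F_def by (rule aux_lin1)
    ultimately show "(1/2) *\<^sub>R (u + w) \<in> M \<and> F ((1/2) *\<^sub>R (u + w)) \<le> (F u + F w)/2 - (norm (u - w))\<^sup>2/8"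
      by blast
  qed
  then obtain m where m: "m \<in> M" "\<And>w. w \<in> M \<Longrightarrow> F m \<le> F w" by blast
  have "inner (v - m) w = 0" if w: "w \<in> M" for w
  proof -
    have "0 \<le> t * (- 2 * inner (v - m) w) + t\<^sup>2 * (norm w)\<^sup>2" for t
    proof -
      have "m + t *\<^sub>R w \<in> M" using m w sub by (simp add: subspace_add subspace_scale)
      then have "F m \<le> F (m + t *\<^sub>R w)" using m by blast
      moreover have "v - (m + t *\<^sub>R w) = (v - m) - t *\<^sub>R w" by simp
      ultimately have "(norm (v - m))\<^sup>2 \<le> (norm ((v - m) - t *\<^sub>R w))\<^sup>2" unfolding F_def by simp
      moreover have "(norm ((v - m) - t *\<^sub>R w))\<^sup>2 = (norm (v - m))\<^sup>2 - 2 * (t * inner (v - m) w) + t\<^sup>2 * (norm w)\<^sup>2"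
        unfolding norm_diff_sq by (simp add: power_mult_distrib)
      ultimately show ?thesis by (rule aux_lin2)
    qed
    then have "- 2 * inner (v - m) w = 0" by (rule quad_zero)
    then show ?thesis by simp
  qed
  then show ?thesis using m by blast
qed


lemma diag_lemma:
  fixes x :: "nat \<Rightarrow> 'a::real_inner"
  assumes xb: "\<And>n. norm (x n) \<le> B"
  shows "\<exists>r. strict_mono r \<and> (\<forall>m. convergent (\<lambda>k. inner (x (r k)) (x m)))"
proof -
  have B0: "0 \<le> B" using xb[of 0] norm_ge_zero order_trans by blast
  interpret S: subseqs "\<lambda>n s. convergent (\<lambda>k. inner (x (s k)) (x n))"
  proof
    fix n and s :: "nat \<Rightarrow> nat" assume "strict_mono s"
    have "norm (inner (x (s k)) (x n)) \<le> B * B" for k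
    proof -
      have "norm (inner (x (s k)) (x n)) \<le> norm (x (s k)) * norm (x n)"
        using Cauchy_Schwarz_ineq2 by simp
      also have "\<dots> \<le> B * B" using xb B0 by (intro mult_mono) auto
      finally show ?thesis .
    qed
    then have "bounded (range (\<lambda>k. inner (x (s k)) (x n)))" unfolding bounded_iff by blast
    then obtain l r' where r': "strict_mono r'" "((\<lambda>k. inner (x (s k)) (x n)) \<circ> r') \<longlonglongrightarrow> l"
      using bounded_imp_convergent_subsequence by blast
    have "convergent (\<lambda>k. inner (x ((s \<circ> r') k)) (x n))"
      using r'(2) unfolding convergent_def by (auto simp: o_def)
    then show "\<exists>r'. strict_mono r' \<and> convergent (\<lambda>k. inner (x ((s \<circ> r') k)) (x n))"
      using r'(1) by blast
  qed
  have "convergent (\<lambda>k. inner (x (S.diagseq k)) (x m))" for m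
  proof -
    have "convergent (\<lambda>k. inner (x ((S.diagseq \<circ> (+) (Suc m)) k)) (x m))"
    proof (rule S.diagseq_holds)
      fix r s :: "nat \<Rightarrow> nat" and n
      assume "strict_mono r" "convergent (\<lambda>k. inner (x (s k)) (x n))"
      then have "convergent ((\<lambda>k. inner (x (s k)) (x n)) \<circ> r)" by (intro convergent_subseq_convergent)
      then show "convergent (\<lambda>k. inner (x ((s \<circ> r) k)) (x n))" by (simp add: o_def)
    qed
    then have "convergent (\<lambda>k. inner (x (S.diagseq (k + Suc m))) (x m))" by (simp add: o_def add.commute)
    then show ?thesis by (rule convergent_ignore_initial_segment[THEN iffD1])
  qed
  then show ?thesis using S.subseq_diagseq by blast
qed

lemma conv_set_closed:
  fixes y :: "nat \<Rightarrow> 'a::real_inner"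
  assumes yb: "\<And>n. norm (y n) \<le> B"
  shows "closed {v. convergent (\<lambda>k. inner (y k) v)}"
  unfolding closed_sequential_limits
proof (intro allI impI, elim conjE)
  fix vs v assume vs: "\<forall>n. vs n \<in> {v. convergent (\<lambda>k. inner (y k) v)}" and lim: "vs \<longlonglongrightarrow> v"
  have B0: "0 \<le> B" using yb[of 0] norm_ge_zero order_trans by blast
  have "Cauchy (\<lambda>k. inner (y k) v)"
  proof (rule metric_CauchyI)
    fix e :: real assume e: "0 < e"
    define d where "d = e / (4 * (B + 1))"
    have d0: "0 < d" unfolding d_def using e B0 by simp
    obtain j where j: "dist (vs j) v < d"
      using lim d0 unfolding LIMSEQ_def by blast
    have "Cauchy (\<lambda>k. inner (y k) (vs j))" using vs convergent_Cauchy by blast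
    then obtain N where N: "\<And>m n. m \<ge> N \<Longrightarrow> n \<ge> N \<Longrightarrow> dist (inner (y m) (vs j)) (inner (y n) (vs j)) < e/2"
      using e unfolding Cauchy_def by (meson half_gt_zero)
    show "\<exists>M. \<forall>m\<ge>M. \<forall>n\<ge>M. dist (inner (y m) v) (inner (y n) v) < e"
    proof (intro exI allI impI)
      fix m n assume mn: "m \<ge> N" "n \<ge> N"
      have eq: "inner (y m) v - inner (y n) v
          = (inner (y m) (vs j) - inner (y n) (vs j)) + inner (y m - y n) (v - vs j)"
        by (simp add: inner_diff_left inner_diff_right)
      have a1: "\<bar>inner (y m) (vs j) - inner (y n) (vs j)\<bar> < e/2"
        using N[OF mn] by (simp add: dist_real_def)
      have "\<bar>inner (y m - y n) (v - vs j)\<bar> \<le> norm (y m - y n) * norm (v - vs j)"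
        by (rule Cauchy_Schwarz_ineq2)
      also have "\<dots> \<le> (2 * B) * d"
      proof (rule mult_mono)
        show "norm (y m - y n) \<le> 2 * B" using norm_triangle_ineq4[of "y m" "y n"] yb[of m] yb[of n] by simp
        show "norm (v - vs j) \<le> d" using j by (simp add: dist_norm norm_minus_commute)
      qed (use B0 in auto)
      also have "(2 * B) * d < e / 2"
      proof -
        have "(2 * B) * d = e * (2 * B) / (4 * (B + 1))" unfolding d_def by simp
        also have "\<dots> < e * (2 * (B + 1)) / (4 * (B + 1))"
          using e B0 by (intro divide_strict_right_mono mult_strict_left_mono) auto
        also have "\<dots> = e / 2"
        proof -
          have "B + 1 \<noteq> 0" using B0 by simp
          then show ?thesis by (simp add: field_simps)
        qed
        finally show ?thesis .
      qed
      finally have a2: "\<bar>inner (y m - y n) (v - vs j)\<bar> < e / 2" .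
      have "\<bar>inner (y m) v - inner (y n) v\<bar> < e" unfolding eq
        using abs_triangle_ineq[of "inner (y m) (vs j) - inner (y n) (vs j)" "inner (y m - y n) (v - vs j)"] a1 a2
        by simp
      then show "dist (inner (y m) v) (inner (y n) v) < e" by (simp add: dist_real_def)
    qed
  qed
  then show "v \<in> {v. convergent (\<lambda>k. inner (y k) v)}" by (simp add: real_Cauchy_convergent)
qed

lemma conv_set_subspace:
  fixes y :: "nat \<Rightarrow> 'a::real_inner"
  shows "subspace {v. convergent (\<lambda>k. inner (y k) v)}"
  unfolding subspace_def
proof (intro conjI ballI allI)
  show "0 \<in> {v. convergent (\<lambda>k. inner (y k) v)}" by (simp add: convergent_const)
next
  fix u v assume "u \<in> {v. convergent (\<lambda>k. inner (y k) v)}" "v \<in> {v. convergent (\<lambda>k. inner (y k) v)}"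
  then show "u + v \<in> {v. convergent (\<lambda>k. inner (y k) v)}"
    by (simp add: inner_add_right convergent_add)
next
  fix c :: real and u assume "u \<in> {v. convergent (\<lambda>k. inner (y k) v)}"
  then have "convergent (\<lambda>k. c * inner (y k) u)" by (intro convergent_mult convergent_const) simp
  then show "c *\<^sub>R u \<in> {v. convergent (\<lambda>k. inner (y k) v)}" by simp
qed

lemma aux_lin4: "(Fm::real) = (A/2 + B/2 - C/4)/2 - (P + Q)/2 \<Longrightarrow> Fm \<le> ((A/2 - P) + (B/2 - Q))/2 - C/8"
  by argo

lemma aux_lin5: "(l::real) \<le> p \<Longrightarrow> 2 * p \<le> N + Q \<Longrightarrow> - Q / 2 \<le> N / 2 - l" by argo

lemma riesz:
  fixes L :: "'a::{real_inner,complete_space} \<Rightarrow> real"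
  assumes add: "\<And>u v. L (u + v) = L u + L v" and sc: "\<And>c u. L (c *\<^sub>R u) = c * L u"
    and bd: "\<And>u. \<bar>L u\<bar> \<le> K * norm u"
  shows "\<exists>z. \<forall>v. L v = inner z v"
proof -
  have bl: "bounded_linear L"
    by (rule bounded_linear_intro[where K=K]) (use add sc bd in \<open>auto simp: mult.commute\<close>)
  define F where "F w = (norm w)\<^sup>2 / 2 - L w" for w
  have "\<exists>u\<in>UNIV. \<forall>w\<in>UNIV. F u \<le> F w"
  proof (rule min_strongly_convex[where lbd="- K\<^sup>2 / 2"])
    show "UNIV \<noteq> {}" by simp
  next
    fix w :: 'a
    have "L w \<le> K * norm w" using bd[of w] by simp
    moreover have "0 \<le> (norm w - K)\<^sup>2" by simp
    then have "2 * (K * norm w) \<le> (norm w)\<^sup>2 + K\<^sup>2" by (simp add: power2_diff algebra_simps)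
    ultimately show "- K\<^sup>2 / 2 \<le> F w" unfolding F_def by (rule aux_lin5)
  next
    fix c
    have "continuous_on UNIV F" unfolding F_def
      by (intro continuous_intros linear_continuous_on[OF bl]) auto
    then have "closed {w. F w \<le> c}" by (intro closed_Collect_le) (auto intro: continuous_on_const)
    then show "closed {w \<in> UNIV. F w \<le> c}" by simp
  next
    fix u w :: 'a
    have "F ((1/2) *\<^sub>R (u + w)) = ((norm u)\<^sup>2/2 + (norm w)\<^sup>2/2 - (norm (u - w))\<^sup>2/4)/2 - (L u + L w)/2"
      unfolding F_def para_half by (simp add: add sc)
    then have "F ((1/2) *\<^sub>R (u + w)) \<le> (F u + F w)/2 - (norm (u - w))\<^sup>2/8"
      unfolding F_def by (rule aux_lin4)
    then show "(1/2) *\<^sub>R (u + w) \<in> UNIV \<and> F ((1/2) *\<^sub>R (u + w)) \<le> (F u + F w)/2 - (norm (u - w))\<^sup>2/8"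
      by simp
  qed
  then obtain z where z: "\<And>w. F z \<le> F w" by blast
  have "L v = inner z v" for v
  proof -
    have "0 \<le> t * (inner z v - L v) + t\<^sup>2 * ((norm v)\<^sup>2 / 2)" for t
    proof -
      have "F z \<le> F (z + t *\<^sub>R v)" by (rule z)
      moreover have "(norm (z + t *\<^sub>R v))\<^sup>2 = (norm z)\<^sup>2 + 2 * (t * inner z v) + t\<^sup>2 * (norm v)\<^sup>2"
        unfolding norm_add_sq by (simp add: power_mult_distrib)
      moreover have "L (z + t *\<^sub>R v) = L z + t * L v" by (simp add: add sc)
      ultimately show ?thesis unfolding F_def by (simp add: algebra_simps)
    qed
    then have "inner z v - L v = 0" by (rule quad_zero)
    then show ?thesis by simp
  qed
  then show ?thesis by blast
qed


lemma weak_seq_compact: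
  fixes x :: "nat \<Rightarrow> 'a::{real_inner,complete_space}"
  assumes xb: "\<And>n. norm (x n) \<le> B"
  shows "\<exists>r z. strict_mono r \<and> weakly_converges (x \<circ> r) z"
proof -
  obtain r where r: "strict_mono r" "\<forall>m. convergent (\<lambda>k. inner (x (r k)) (x m))"
    using diag_lemma[of x B, OF xb] by blast
  define y where "y = x \<circ> r"
  have yb: "norm (y k) \<le> B" for k unfolding y_def using xb by simp
  define V where "V = {v. convergent (\<lambda>k. inner (y k) v)}"
  have "range x \<subseteq> V" using r(2) unfolding V_def y_def by auto
  then have "span (range x) \<subseteq> V" using conv_set_subspace[of y] by (intro span_minimal) (auto simp: V_def)
  then have MV: "closure (span (range x)) \<subseteq> V" using conv_set_closed[OF yb] by (intro closure_minimal) (auto simp: V_def)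
  define M where "M = closure (span (range x))"
  have yM: "y k \<in> M" for k
  proof -
    have "x (r k) \<in> span (range x)" by (rule span_base) simp
    then show ?thesis unfolding M_def y_def using closure_subset by auto
  qed
  have allV: "v \<in> V" for v
  proof -
    have subM: "subspace M" unfolding M_def by (intro subspace_closure_rv subspace_span)
    obtain m where m: "m \<in> M" "\<forall>w\<in>M. inner (v - m) w = 0"
      using projection_exists[OF subM] unfolding M_def by blast
    have "inner (y k) v = inner (y k) m" for k
    proof -
      have "inner (y k) (v - m) = 0" using m(2) yM[of k] by (simp add: inner_commute)
      then show ?thesis by (simp add: inner_diff_right)
    qed
    moreover have "m \<in> V" using m(1) MV unfolding M_def by blast
    ultimately show ?thesis unfolding V_def by simp
  qed
  define L where "L v = lim (\<lambda>k. inner (y k) v)" for v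
  have Lt: "(\<lambda>k. inner (y k) v) \<longlonglongrightarrow> L v" for v
    using allV[of v] unfolding V_def L_def by (simp add: convergent_LIMSEQ_iff)
  have add: "L (u + v) = L u + L v" for u v
  proof -
    have "(\<lambda>k. inner (y k) (u + v)) \<longlonglongrightarrow> L u + L v"
      unfolding inner_add_right by (intro tendsto_add Lt)
    then show ?thesis using Lt[of "u+v"] LIMSEQ_unique by blast
  qed
  have sc: "L (c *\<^sub>R u) = c * L u" for c u
  proof -
    have "(\<lambda>k. inner (y k) (c *\<^sub>R u)) \<longlonglongrightarrow> c * L u"
      unfolding inner_scaleR_right by (intro tendsto_mult_left Lt)
    then show ?thesis using Lt[of "c *\<^sub>R u"] LIMSEQ_unique by blast
  qed
  have bd: "\<bar>L u\<bar> \<le> B * norm u" for u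
  proof (rule LIMSEQ_le_const2)
    show "(\<lambda>k. \<bar>inner (y k) u\<bar>) \<longlonglongrightarrow> \<bar>L u\<bar>" by (intro tendsto_rabs Lt)
    have "\<bar>inner (y k) u\<bar> \<le> B * norm u" for k
    proof -
      have "\<bar>inner (y k) u\<bar> \<le> norm (y k) * norm u" by (rule Cauchy_Schwarz_ineq2)
      also have "\<dots> \<le> B * norm u" using yb by (intro mult_right_mono) auto
      finally show ?thesis .
    qed
    then show "\<exists>N. \<forall>n\<ge>N. \<bar>inner (y n) u\<bar> \<le> B * norm u" by blast
  qed
  obtain z where z: "\<And>v. L v = inner z v" using riesz[OF add sc bd] by blast
  have "weakly_converges y z" unfolding weakly_converges_def using Lt z by simp
  then show ?thesis using r(1) unfolding y_def by blast
qed

lemma inner_via_norms: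
  fixes a z1 z2 :: "'a::real_inner"
  shows "inner a (z1 - z2) = ((norm (a - z2))\<^sup>2 - (norm (a - z1))\<^sup>2 + (norm z1)\<^sup>2 - (norm z2)\<^sup>2) / 2"
  unfolding norm_diff_sq by (simp add: inner_diff_right)

lemma opial:
  fixes x :: "nat \<Rightarrow> 'a::{real_inner,complete_space}" and S :: "'a set"
  assumes xb: "\<And>n. norm (x n) \<le> B"
    and conv: "\<And>z. z \<in> S \<Longrightarrow> convergent (\<lambda>n. (norm (x n - z))\<^sup>2)"
    and clus: "\<And>r z. strict_mono r \<Longrightarrow> weakly_converges (x \<circ> r) z \<Longrightarrow> z \<in> S"
  shows "\<exists>z\<in>S. weakly_converges x z"
proof -
  obtain r z1 where r: "strict_mono r" "weakly_converges (x \<circ> r) z1"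
    using weak_seq_compact[of x B, OF xb] by blast
  have z1S: "z1 \<in> S" using clus[OF r] .
  have "weakly_converges x z1"
    unfolding weakly_converges_def
  proof (rule allI, rule ccontr)
    fix y0 assume nt: "\<not> (\<lambda>n. inner (x n) y0) \<longlonglongrightarrow> inner z1 y0"
    obtain d s where d: "d > 0" and s: "strict_mono (s::nat\<Rightarrow>nat)"
      and ds: "\<And>k. d \<le> \<bar>inner (x (s k)) y0 - inner z1 y0\<bar>"
      using not_tendsto_subseq[OF nt] by blast
    obtain r' z2 where r': "strict_mono r'" "weakly_converges ((x \<circ> s) \<circ> r') z2"
      using weak_seq_compact[of "x \<circ> s" B] xb by auto
    have sr: "strict_mono (s \<circ> r')" using s r'(1) by (rule strict_mono_o)
    have w2: "weakly_converges (x \<circ> (s \<circ> r')) z2" using r'(2) by (simp add: o_assoc)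
    have z2S: "z2 \<in> S" using clus[OF sr w2] .
    define h where "h n = inner (x n) (z1 - z2)" for n
    have hc: "convergent h"
    proof -
      have "h = (\<lambda>n. ((norm (x n - z2))\<^sup>2 - (norm (x n - z1))\<^sup>2 + (norm z1)\<^sup>2 - (norm z2)\<^sup>2) / 2)"
        unfolding h_def inner_via_norms ..
      moreover have "convergent (\<lambda>n. ((norm (x n - z2))\<^sup>2 - (norm (x n - z1))\<^sup>2 + (norm z1)\<^sup>2 - (norm z2)\<^sup>2) / 2)"
      proof -
        obtain a1 where a1: "(\<lambda>n. (norm (x n - z1))\<^sup>2) \<longlonglongrightarrow> a1" using conv[OF z1S] unfolding convergent_def by blast
        obtain a2 where a2: "(\<lambda>n. (norm (x n - z2))\<^sup>2) \<longlonglongrightarrow> a2" using conv[OF z2S] unfolding convergent_def by blast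
        have "(\<lambda>n. ((norm (x n - z2))\<^sup>2 - (norm (x n - z1))\<^sup>2 + (norm z1)\<^sup>2 - (norm z2)\<^sup>2) / 2)
             \<longlonglongrightarrow> (a2 - a1 + (norm z1)\<^sup>2 - (norm z2)\<^sup>2) / 2"
          by (intro tendsto_intros a1 a2) simp
        then show ?thesis unfolding convergent_def by blast
      qed
      ultimately show ?thesis by simp
    qed
    then obtain l where l: "h \<longlonglongrightarrow> l" unfolding convergent_def by blast
    have "(h \<circ> r) \<longlonglongrightarrow> inner z1 (z1 - z2)"
      using r(2) unfolding weakly_converges_def h_def by (simp add: o_def)
    moreover have "(h \<circ> r) \<longlonglongrightarrow> l" using l r(1) by (rule LIMSEQ_subseq_LIMSEQ)
    ultimately have e1: "inner z1 (z1 - z2) = l" using LIMSEQ_unique by blast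
    have "(h \<circ> (s \<circ> r')) \<longlonglongrightarrow> inner z2 (z1 - z2)"
      using w2 unfolding weakly_converges_def h_def by (simp add: o_def)
    moreover have "(h \<circ> (s \<circ> r')) \<longlonglongrightarrow> l" using l sr by (rule LIMSEQ_subseq_LIMSEQ)
    ultimately have e2: "inner z2 (z1 - z2) = l" using LIMSEQ_unique by blast
    have "inner (z1 - z2) (z1 - z2) = 0" using e1 e2 by (simp add: inner_diff_left)
    then have z12: "z1 = z2" by simp
    have "(\<lambda>k. inner (x ((s \<circ> r') k)) y0) \<longlonglongrightarrow> inner z1 y0"
      using w2 z12 unfolding weakly_converges_def by (simp add: o_def)
    then have "(\<lambda>k. \<bar>inner (x ((s \<circ> r') k)) y0 - inner z1 y0\<bar>) \<longlonglongrightarrow> \<bar>inner z1 y0 - inner z1 y0\<bar>"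
      by (intro tendsto_rabs tendsto_diff tendsto_const)
    then have t0: "(\<lambda>k. \<bar>inner (x ((s \<circ> r') k)) y0 - inner z1 y0\<bar>) \<longlonglongrightarrow> 0" by simp
    have "d \<le> 0"
    proof (rule LIMSEQ_le_const[OF t0])
      show "\<exists>N. \<forall>n\<ge>N. d \<le> \<bar>inner (x ((s \<circ> r') n)) y0 - inner z1 y0\<bar>" using ds by auto
    qed
    then show False using d by simp
  qed
  then show ?thesis using z1S by blast
qed


lemma above_tangent:
  fixes g :: "'a::real_inner \<Rightarrow> real"
  assumes cv: "convex_on UNIV g" and gd: "(g has_derivative (\<lambda>h. inner v h)) (at x)"
  shows "g x + inner v (y - x) \<le> g y"
proof -
  have lim: "((\<lambda>t. (g (x + t *\<^sub>R (y - x)) - g x) / t) \<longlongrightarrow> inner v (y - x)) (at_right 0)"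
    by (rule dq_limit[OF gd])
  have ev: "eventually (\<lambda>t. (g (x + t *\<^sub>R (y - x)) - g x) / t \<le> g y - g x) (at_right (0::real))"
    unfolding eventually_at_right_field
  proof (intro exI[of _ 1] conjI allI impI)
    fix t :: real assume t: "0 < t" "t < 1"
    have eq: "x + t *\<^sub>R (y - x) = (1 - t) *\<^sub>R x + t *\<^sub>R y" by (simp add: algebra_simps)
    have "g ((1 - t) *\<^sub>R x + t *\<^sub>R y) \<le> (1 - t) * g x + t * g y"
      using cv t unfolding convex_on_def by auto
    then have "g (x + t *\<^sub>R (y - x)) - g x \<le> t * (g y - g x)" unfolding eq by (simp add: algebra_simps)
    then show "(g (x + t *\<^sub>R (y - x)) - g x) / t \<le> g y - g x" using t by (simp add: divide_le_eq mult.commute)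
  qed simp
  have "inner v (y - x) \<le> g y - g x"
    by (rule tendsto_upperbound[OF lim ev trivial_limit_at_right_real])
  then show ?thesis by simp
qed

lemma line_deriv:
  fixes g :: "'a::real_inner \<Rightarrow> real"
  assumes gd: "\<And>y. (g has_derivative (\<lambda>h. inner (G y) h)) (at y)"
  shows "((\<lambda>t. g (x + t *\<^sub>R h)) has_real_derivative inner (G (x + s *\<^sub>R h)) h) (at s)"
proof -
  have l: "((\<lambda>t. x + t *\<^sub>R h) has_derivative (\<lambda>t. t *\<^sub>R h)) (at s)"
    by (auto intro!: derivative_eq_intros)
  have "((\<lambda>t. g (x + t *\<^sub>R h)) has_derivative (\<lambda>t. inner (G (x + s *\<^sub>R h)) (t *\<^sub>R h))) (at s)"
    using has_derivative_compose[OF l gd[of "x + s *\<^sub>R h"]] by (simp add: o_def)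
  then have "((\<lambda>t. g (x + t *\<^sub>R h)) has_derivative (\<lambda>t. t * inner (G (x + s *\<^sub>R h)) h)) (at s)" by simp
  then show ?thesis
    by (simp add: has_field_derivative_def mult.commute[of _ "inner (G (x + s *\<^sub>R h)) h"])
qed

lemma descent:
  fixes g :: "'a::real_inner \<Rightarrow> real"
  assumes gd: "\<And>y. (g has_derivative (\<lambda>h. inner (G y) h)) (at y)"
    and lip: "\<And>y z. norm (G y - G z) \<le> (1 / \<beta>) * norm (y - z)" and b: "0 < \<beta>"
  shows "g y \<le> g x + inner (G x) (y - x) + (norm (y - x))\<^sup>2 / (2 * \<beta>)"
proof -
  define h where "h = y - x"
  define \<phi> where "\<phi> t = g (x + t *\<^sub>R h) - t * inner (G x) h - t\<^sup>2 * ((norm h)\<^sup>2 / (2 * \<beta>))" for t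
  have "\<phi> 1 \<le> \<phi> 0"
  proof (rule DERIV_nonpos_imp_nonincreasing[of 0 1 \<phi>])
    fix s :: real assume s: "0 \<le> s" "s \<le> 1"
    have d: "(\<phi> has_real_derivative
        (inner (G (x + s *\<^sub>R h)) h - inner (G x) h - (2 * s) * ((norm h)\<^sup>2 / (2 * \<beta>)))) (at s)"
      unfolding \<phi>_def
      by (intro DERIV_diff line_deriv[OF gd] DERIV_cmult_right DERIV_cmult_Id)
         (auto intro!: derivative_eq_intros)
    have "inner (G (x + s *\<^sub>R h)) h - inner (G x) h = inner (G (x + s *\<^sub>R h) - G x) h"
      by (simp add: inner_diff_left)
    also have "\<dots> \<le> norm (G (x + s *\<^sub>R h) - G x) * norm h" by (rule real_inner_class.Cauchy_Schwarz_ineq2[THEN abs_le_D1])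
    also have "\<dots> \<le> ((1 / \<beta>) * norm (s *\<^sub>R h)) * norm h"
      using lip[of "x + s *\<^sub>R h" x] by (intro mult_right_mono) auto
    also have "\<dots> = (2 * s) * ((norm h)\<^sup>2 / (2 * \<beta>))" using s b by (simp add: power2_eq_square)
    finally have "inner (G (x + s *\<^sub>R h)) h - inner (G x) h - (2 * s) * ((norm h)\<^sup>2 / (2 * \<beta>)) \<le> 0" by simp
    then show "\<exists>y. (\<phi> has_real_derivative y) (at s) \<and> y \<le> 0" using d by blast
  qed simp
  then show ?thesis unfolding \<phi>_def h_def by simp
qed


lemma aux_half: "(a::real) + \<beta> * N - \<beta> / 2 * N \<le> c \<Longrightarrow> a + \<beta> / 2 * N \<le> c"
proof -
  have "\<beta> * N - \<beta> / 2 * N = \<beta> / 2 * N" by (simp add: field_simps)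
  then show "(a::real) + \<beta> * N - \<beta> / 2 * N \<le> c \<Longrightarrow> a + \<beta> / 2 * N \<le> c" by linarith
qed

lemma coco_half:
  fixes g :: "'a::real_inner \<Rightarrow> real"
  assumes cv: "convex_on UNIV g" and gd: "\<And>y. (g has_derivative (\<lambda>h. inner (G y) h)) (at y)"
    and lip: "\<And>y z. norm (G y - G z) \<le> (1 / \<beta>) * norm (y - z)" and b: "0 < \<beta>"
  shows "g x + inner (G x) (y - x) + \<beta> / 2 * (norm (G y - G x))\<^sup>2 \<le> g y"
proof -
  define d where "d = G y - G x"
  define w where "w = y - \<beta> *\<^sub>R d"
  have a: "g x + inner (G x) (w - x) \<le> g w" by (rule above_tangent[OF cv gd])
  have c: "g w \<le> g y + inner (G y) (w - y) + (norm (w - y))\<^sup>2 / (2 * \<beta>)" by (rule descent[OF gd lip b])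
  have e1: "inner (G x) (w - x) = inner (G x) (y - x) - \<beta> * inner (G x) d"
    unfolding w_def by (simp add: inner_diff_right algebra_simps)
  have e2: "inner (G y) (w - y) = - \<beta> * inner (G y) d" unfolding w_def by simp
  have e3: "(norm (w - y))\<^sup>2 / (2 * \<beta>) = \<beta> / 2 * (norm d)\<^sup>2"
    unfolding w_def using b by (simp add: power2_eq_square)
  have e4: "inner (G y) d - inner (G x) d = (norm d)\<^sup>2"
    unfolding d_def by (simp add: inner_diff_left power2_norm_eq_inner)
  from a c have "g x + (inner (G x) (y - x) - \<beta> * inner (G x) d) \<le> g y + (- \<beta> * inner (G y) d) + \<beta> / 2 * (norm d)\<^sup>2"
    unfolding e1 e2 e3 by linarith
  then have "g x + inner (G x) (y - x) + \<beta> * (inner (G y) d - inner (G x) d) - \<beta> / 2 * (norm d)\<^sup>2 \<le> g y"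
    by (simp add: algebra_simps)
  then have "g x + inner (G x) (y - x) + \<beta> * (norm d)\<^sup>2 - \<beta> / 2 * (norm d)\<^sup>2 \<le> g y" unfolding e4 .
  then show ?thesis unfolding d_def by (rule aux_half)
qed

lemma cocoercive:
  fixes g :: "'a::real_inner \<Rightarrow> real"
  assumes cv: "convex_on UNIV g" and gd: "\<And>y. (g has_derivative (\<lambda>h. inner (G y) h)) (at y)"
    and lip: "\<And>y z. norm (G y - G z) \<le> (1 / \<beta>) * norm (y - z)" and b: "0 < \<beta>"
  shows "\<beta> * (norm (G x - G y))\<^sup>2 \<le> inner (G x - G y) (x - y)"
proof -
  have 1: "g x + inner (G x) (y - x) + \<beta> / 2 * (norm (G y - G x))\<^sup>2 \<le> g y" by (rule coco_half[OF cv gd lip b])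
  have 2: "g y + inner (G y) (x - y) + \<beta> / 2 * (norm (G x - G y))\<^sup>2 \<le> g x" by (rule coco_half[OF cv gd lip b])
  have n: "norm (G y - G x) = norm (G x - G y)" by (rule norm_minus_commute)
  have i: "inner (G x - G y) (x - y) = - inner (G x) (y - x) - inner (G y) (x - y)"
    by (simp add: inner_diff_left inner_diff_right algebra_simps)
  show ?thesis using 1 2 unfolding i n by linarith
qed


definition vi :: "('a::real_inner \<Rightarrow> ereal) \<Rightarrow> real \<Rightarrow> 'a \<Rightarrow> 'a \<Rightarrow> bool" where
  "vi f \<gamma> x p \<longleftrightarrow> f p \<noteq> \<infinity> \<and>
     (\<forall>y. f y \<noteq> \<infinity> \<longrightarrow> \<gamma> * real_of_ereal (f p) + inner (x - p) (y - p) \<le> \<gamma> * real_of_ereal (f y))"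

lemma f_fin:
  assumes "proper_fun f" "f y \<noteq> \<infinity>"
  shows "f y = ereal (real_of_ereal (f y))"
proof -
  have "f y \<noteq> -\<infinity>" using assms(1) unfolding proper_fun_def by blast
  then show ?thesis using assms(2) by (cases "f y") auto
qed

lemma convex_real:
  fixes f :: "'a::real_vector \<Rightarrow> ereal"
  assumes pf: "proper_fun f" and cf: "convex_fun f" and u: "f u \<noteq> \<infinity>" and w: "f w \<noteq> \<infinity>"
    and t: "0 < t" "t < 1"
  shows "f (t *\<^sub>R u + (1 - t) *\<^sub>R w) \<noteq> \<infinity> \<and>
    real_of_ereal (f (t *\<^sub>R u + (1 - t) *\<^sub>R w)) \<le> t * real_of_ereal (f u) + (1 - t) * real_of_ereal (f w)"
proof -
  have "f (t *\<^sub>R u + (1 - t) *\<^sub>R w) \<le> ereal t * f u + ereal (1 - t) * f w"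
    using cf t unfolding convex_fun_def by blast
  also have "\<dots> = ereal (t * real_of_ereal (f u) + (1 - t) * real_of_ereal (f w))"
    by (subst f_fin[OF pf u], subst f_fin[OF pf w]) simp
  finally have le: "f (t *\<^sub>R u + (1 - t) *\<^sub>R w) \<le> ereal (t * real_of_ereal (f u) + (1 - t) * real_of_ereal (f w))" .
  then have fin: "f (t *\<^sub>R u + (1 - t) *\<^sub>R w) \<noteq> \<infinity>" by auto
  have "ereal (real_of_ereal (f (t *\<^sub>R u + (1 - t) *\<^sub>R w))) \<le> ereal (t * real_of_ereal (f u) + (1 - t) * real_of_ereal (f w))"
    using le f_fin[OF pf fin] by simp
  then show ?thesis using fin by simp
qed

lemma norm_sub_sq3:
  fixes x p y :: "'a::real_inner"
  shows "(norm (x - y))\<^sup>2 = (norm (x - p))\<^sup>2 - 2 * inner (x - p) (y - p) + (norm (y - p))\<^sup>2"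
proof -
  have "x - y = (x - p) - (y - p)" by simp
  then show ?thesis using norm_diff_sq[of "x - p" "y - p"] by simp
qed

lemma aux_vi: "(A::real) + I \<le> B \<Longrightarrow> N = P - 2 * I + Q \<Longrightarrow> 0 \<le> Q \<Longrightarrow> A + 1/2 * P \<le> B + 1/2 * N"
  by argo

lemma aux_vi2: "(A::real) + 1/2 * N \<le> B + 1/2 * P \<Longrightarrow> B + I \<le> A \<Longrightarrow> N = P - 2 * I + Q \<Longrightarrow> Q \<le> 0"
  by argo

lemma prox_unique:
  fixes f :: "'a::real_inner \<Rightarrow> ereal"
  assumes pf: "proper_fun f" and g: "0 < \<gamma>" and v: "vi f \<gamma> x p"
  shows "prox (\<lambda>y. ereal \<gamma> * f y) x = p"
  unfolding prox_def
proof (rule the_equality)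
  have fp: "f p \<noteq> \<infinity>" using v unfolding vi_def by blast
  show "\<forall>y. ereal \<gamma> * f p + ereal (1 / 2 * (norm (x - p))\<^sup>2) \<le> ereal \<gamma> * f y + ereal (1 / 2 * (norm (x - y))\<^sup>2)"
  proof
    fix y
    show "ereal \<gamma> * f p + ereal (1 / 2 * (norm (x - p))\<^sup>2) \<le> ereal \<gamma> * f y + ereal (1 / 2 * (norm (x - y))\<^sup>2)"
    proof (cases "f y = \<infinity>")
      case True then show ?thesis using g by simp
    next
      case False
      have vy: "\<gamma> * real_of_ereal (f p) + inner (x - p) (y - p) \<le> \<gamma> * real_of_ereal (f y)"
        using v False unfolding vi_def by blast
      have "\<gamma> * real_of_ereal (f p) + 1 / 2 * (norm (x - p))\<^sup>2 \<le> \<gamma> * real_of_ereal (f y) + 1 / 2 * (norm (x - y))\<^sup>2"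
        using vy norm_sub_sq3[of x y p] zero_le_power2[of "norm (y - p)"] by (rule aux_vi)
      then show ?thesis by (subst f_fin[OF pf fp], subst f_fin[OF pf False]) simp
    qed
  qed
next
  fix q assume q: "\<forall>y. ereal \<gamma> * f q + ereal (1 / 2 * (norm (x - q))\<^sup>2) \<le> ereal \<gamma> * f y + ereal (1 / 2 * (norm (x - y))\<^sup>2)"
  have fp: "f p \<noteq> \<infinity>" using v unfolding vi_def by blast
  have qp: "ereal \<gamma> * f q + ereal (1 / 2 * (norm (x - q))\<^sup>2) \<le> ereal \<gamma> * f p + ereal (1 / 2 * (norm (x - p))\<^sup>2)"
    using q by blast
  have fq: "f q \<noteq> \<infinity>"
  proof
    assume "f q = \<infinity>"
    then have L: "ereal \<gamma> * f q + ereal (1 / 2 * (norm (x - q))\<^sup>2) = \<infinity>" using g by simp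
    have R: "ereal \<gamma> * f p + ereal (1 / 2 * (norm (x - p))\<^sup>2) \<noteq> \<infinity>"
      by (subst f_fin[OF pf fp]) simp
    show False using qp[unfolded L] R by (simp only: ereal_infty_less_eq(1))
  qed
  have r1: "\<gamma> * real_of_ereal (f q) + 1 / 2 * (norm (x - q))\<^sup>2 \<le> \<gamma> * real_of_ereal (f p) + 1 / 2 * (norm (x - p))\<^sup>2"
    using qp by (subst (asm) f_fin[OF pf fp], subst (asm) f_fin[OF pf fq]) simp
  have r2: "\<gamma> * real_of_ereal (f p) + inner (x - p) (q - p) \<le> \<gamma> * real_of_ereal (f q)"
    using v fq unfolding vi_def by blast
  have "(norm (q - p))\<^sup>2 \<le> 0" using r1 r2 norm_sub_sq3[of x q p] by (rule aux_vi2)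
  then show "q = p" by simp
qed

lemma vi_firm:
  assumes v1: "vi f \<gamma> x p" and v2: "vi f \<gamma> x' p'"
  shows "(norm (p - p'))\<^sup>2 \<le> inner (x - x') (p - p')"
proof -
  have a: "\<gamma> * real_of_ereal (f p) + inner (x - p) (p' - p) \<le> \<gamma> * real_of_ereal (f p')"
    using v1 v2 unfolding vi_def by blast
  have b: "\<gamma> * real_of_ereal (f p') + inner (x' - p') (p - p') \<le> \<gamma> * real_of_ereal (f p)"
    using v1 v2 unfolding vi_def by blast
  have "inner (x - p) (p' - p) + inner (x' - p') (p - p') = (norm (p - p'))\<^sup>2 - inner (x - x') (p - p')"
    by (simp add: inner_diff_left inner_diff_right power2_norm_eq_inner inner_commute algebra_simps)
  then show ?thesis using a b by linarith
qed

lemma vi_nonexp: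
  assumes v1: "vi f \<gamma> x p" and v2: "vi f \<gamma> x' p'"
  shows "norm (p - p') \<le> norm (x - x')"
proof -
  have "(norm (p - p'))\<^sup>2 \<le> norm (x - x') * norm (p - p')"
    using vi_firm[OF v1 v2] Cauchy_Schwarz_ineq2[of "x - x'" "p - p'"] by simp
  then show ?thesis
    by (metis norm_ge_zero power2_eq_square mult_right_le_imp_le mult_eq_0_iff mult_zero_left order_refl
        zero_less_norm_iff norm_eq_zero mult_le_cancel_right)
qed


lemma ereal_le_real:
  assumes pf: "proper_fun f" and "f y \<le> ereal C"
  shows "f y \<noteq> \<infinity> \<and> real_of_ereal (f y) \<le> C"
proof -
  have "f y \<noteq> -\<infinity>" using pf unfolding proper_fun_def by blast
  then show ?thesis using assms(2) by (cases "f y") auto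
qed

lemma lsc_plus_closed:
  fixes f :: "'a::real_normed_vector \<Rightarrow> ereal"
  assumes pf: "proper_fun f" and lsc: "lsc_fun f" and g: "0 < \<gamma>" and ct: "\<And>w. isCont \<phi> w"
  shows "closed {w \<in> {w. f w \<noteq> \<infinity>}. \<gamma> * real_of_ereal (f w) + \<phi> w \<le> c}"
  unfolding closed_sequential_limits
proof (intro allI impI, elim conjE)
  fix ws w assume ws: "\<forall>n. ws n \<in> {w \<in> {w. f w \<noteq> \<infinity>}. \<gamma> * real_of_ereal (f w) + \<phi> w \<le> c}"
    and lim: "ws \<longlonglongrightarrow> w"
  have pl: "(\<lambda>n. \<phi> (ws n)) \<longlonglongrightarrow> \<phi> w" using ct[of w] lim by (rule isCont_tendsto_compose)
  have key: "f w \<noteq> \<infinity> \<and> \<gamma> * real_of_ereal (f w) \<le> c - \<phi> w + \<delta>" if d: "0 < \<delta>" for \<delta>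
  proof -
    define C where "C = (c - \<phi> w + \<delta>) / \<gamma>"
    obtain N where N: "\<And>n. n \<ge> N \<Longrightarrow> dist (\<phi> (ws n)) (\<phi> w) < \<delta>"
      using pl d unfolding LIMSEQ_def by blast
    have "ws (n + N) \<in> {y. f y \<le> ereal C}" for n
    proof -
      have "dist (\<phi> (ws (n + N))) (\<phi> w) < \<delta>" using N by simp
      then have a: "\<phi> w - \<delta> < \<phi> (ws (n + N))" by (simp add: dist_real_def abs_less_iff)
      have b: "f (ws (n + N)) \<noteq> \<infinity>" "\<gamma> * real_of_ereal (f (ws (n + N))) + \<phi> (ws (n + N)) \<le> c"
        using ws by auto
      have "\<gamma> * real_of_ereal (f (ws (n + N))) \<le> c - \<phi> w + \<delta>" using a b(2) by linarith
      then have "real_of_ereal (f (ws (n + N))) \<le> C" unfolding C_def using g by (simp add: field_simps)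
      then have "f (ws (n + N)) \<le> ereal C" by (subst f_fin[OF pf b(1)]) simp
      then show ?thesis by simp
    qed
    moreover have "(\<lambda>n. ws (n + N)) \<longlonglongrightarrow> w" using lim by (rule LIMSEQ_ignore_initial_segment)
    moreover have "closed {y. f y \<le> ereal C}" using lsc unfolding lsc_fun_def by blast
    ultimately have "w \<in> {y. f y \<le> ereal C}" using closed_sequentially[of "{y. f y \<le> ereal C}" "\<lambda>n. ws (n + N)" w] by blast
    then have "f w \<noteq> \<infinity> \<and> real_of_ereal (f w) \<le> C" using ereal_le_real[OF pf] by simp
    then show ?thesis unfolding C_def using g by (simp add: field_simps)
  qed
  have fw: "f w \<noteq> \<infinity>" using key[of 1] by simp
  have "\<gamma> * real_of_ereal (f w) + \<phi> w \<le> c"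
  proof -
    have "\<gamma> * real_of_ereal (f w) \<le> c - \<phi> w"
      by (rule field_le_epsilon) (use key in auto)
    then show ?thesis by simp
  qed
  then show "w \<in> {w \<in> {w. f w \<noteq> \<infinity>}. \<gamma> * real_of_ereal (f w) + \<phi> w \<le> c}" using fw by simp
qed

lemma lower_linear:
  fixes f :: "'a::real_normed_vector \<Rightarrow> ereal"
  assumes pf: "proper_fun f" and cf: "convex_fun f" and lsc: "lsc_fun f" and p0: "f p0 \<noteq> \<infinity>"
  shows "\<exists>r>0. \<forall>y. f y \<noteq> \<infinity> \<longrightarrow> real_of_ereal (f p0) - 1 - 2 * norm (y - p0) / r \<le> real_of_ereal (f y)"
proof -
  define a where "a = real_of_ereal (f p0)"
  define A where "A = {y. f y \<le> ereal (a - 1)}"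
  have "closed A" using lsc unfolding lsc_fun_def A_def by blast
  then have op: "open (- A)" by (simp add: open_Compl)
  have fp0: "f p0 = ereal a" unfolding a_def by (rule f_fin[OF pf p0])
  have "p0 \<notin> A" unfolding A_def using fp0 by simp
  then obtain r where r: "r > 0" "ball p0 r \<subseteq> - A" using op open_contains_ball_eq by blast
  have inball: "a - 1 < real_of_ereal (f y)" if "f y \<noteq> \<infinity>" "norm (y - p0) < r" for y
  proof -
    have "y \<in> ball p0 r" using that(2) by (simp add: dist_norm norm_minus_commute)
    then have "\<not> f y \<le> ereal (a - 1)" using r(2) unfolding A_def by auto
    then show ?thesis by (subst (asm) f_fin[OF pf that(1)]) simp
  qed
  have "a - 1 - 2 * norm (y - p0) / r \<le> real_of_ereal (f y)" if fy: "f y \<noteq> \<infinity>" for y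
  proof (cases "norm (y - p0) < r")
    case True
    have "0 \<le> 2 * norm (y - p0) / r" using r by simp
    then show ?thesis using inball[OF fy True] by linarith
  next
    case False
    define n where "n = norm (y - p0)"
    have n: "r \<le> n" "0 < n" using False r unfolding n_def by auto
    define t where "t = r / (2 * n)"
    have t: "0 < t" "t < 1" unfolding t_def using n r by (auto simp: field_simps)
    define w where "w = t *\<^sub>R y + (1 - t) *\<^sub>R p0"
    have cw: "f w \<noteq> \<infinity> \<and> real_of_ereal (f w) \<le> t * real_of_ereal (f y) + (1 - t) * a"
      unfolding w_def a_def by (rule convex_real[OF pf cf fy p0 t])
    have "w - p0 = t *\<^sub>R (y - p0)" unfolding w_def by (simp add: algebra_simps)
    then have "norm (w - p0) = t * n" unfolding n_def using t by simp
    also have "\<dots> = r / 2" unfolding t_def using n by simp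
    finally have "norm (w - p0) < r" using r by simp
    then have "a - 1 < real_of_ereal (f w)" using inball cw by blast
    then have "a - 1 < t * real_of_ereal (f y) + (1 - t) * a" using cw by linarith
    then have "t * a - 1 < t * real_of_ereal (f y)" by (simp add: algebra_simps)
    then have "a - 1 / t < real_of_ereal (f y)" using t by (simp add: field_simps)
    moreover have "1 / t = 2 * n / r" unfolding t_def by simp
    ultimately have "a - 2 * n / r < real_of_ereal (f y)" by simp
    then show ?thesis unfolding n_def by simp
  qed
  then show ?thesis using r(1) unfolding a_def by blast
qed


lemma aux_t: assumes h1: "(A::real) + P/2 \<le> Y + N/2" and h2: "Y \<le> t*Bv + (1-t)*A"
  and h3: "N = P - 2*(t*I) + t^2*Q" and t: "0 < t"
  shows "A + I - t*(Q/2) \<le> Bv"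
proof -
  have "t*(A + I - t*(Q/2)) \<le> t*Bv"
  proof -
    have e: "t*(A + I - t*(Q/2)) = t*A + t*I - t^2*Q/2" by (simp add: algebra_simps power2_eq_square)
    have e2: "(1-t)*A = A - t*A" by (simp add: algebra_simps)
    show ?thesis unfolding e using h1 h2 h3 e2 by argo
  qed
  then show ?thesis using t by simp
qed

lemma aux_mid: assumes "Fm = g*m + N/2" "g*m \<le> g*U/2 + g*W/2" "N = A/2 + B/2 - C/4"
  shows "(Fm::real) \<le> ((g*U + A/2) + (g*W + B/2))/2 - C/8"
  using assms by argo

lemma aux_lb: assumes "(g::real) * fw \<ge> g * (f0 - 1) - a * nw" "nw \<le> s + c" "0 \<le> a" "s\<^sup>2/2 - a * s \<ge> - a\<^sup>2/2"
  shows "g * fw + s\<^sup>2/2 \<ge> g * (f0 - 1) - a * c - a\<^sup>2/2"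
proof -
  have "a * nw \<le> a * (s + c)" using assms(2,3) by (rule mult_left_mono)
  then have "a * nw \<le> a * s + a * c" by (simp add: distrib_left)
  then show ?thesis using assms(1,4) by argo
qed

lemma prox_exists:
  fixes f :: "'a::{real_inner,complete_space} \<Rightarrow> ereal"
  assumes pf: "proper_fun f" and cf: "convex_fun f" and lsc: "lsc_fun f" and g: "0 < \<gamma>"
  shows "\<exists>p. vi f \<gamma> x p"
proof -
  obtain p0 where p0: "f p0 \<noteq> \<infinity>" using pf unfolding proper_fun_def by blast
  obtain r where r: "r > 0" and lin: "\<And>y. f y \<noteq> \<infinity> \<Longrightarrow> real_of_ereal (f p0) - 1 - 2 * norm (y - p0) / r \<le> real_of_ereal (f y)"
    using lower_linear[OF pf cf lsc p0] by blast
  define D where "D = {w. f w \<noteq> \<infinity>}"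
  define F where "F w = \<gamma> * real_of_ereal (f w) + (norm (x - w))\<^sup>2 / 2" for w
  define a where "a = 2 * \<gamma> / r"
  define c where "c = norm (x - p0)"
  have a0: "0 \<le> a" unfolding a_def using g r by simp
  have "\<exists>u\<in>D. \<forall>w\<in>D. F u \<le> F w"
  proof (rule min_strongly_convex[where lbd="\<gamma> * (real_of_ereal (f p0) - 1) - a * c - a\<^sup>2/2"])
    show "D \<noteq> {}" using p0 unfolding D_def by blast
  next
    fix w assume w: "w \<in> D"
    define s where "s = norm (x - w)"
    have l1: "\<gamma> * real_of_ereal (f w) \<ge> \<gamma> * (real_of_ereal (f p0) - 1) - a * norm (w - p0)"
    proof -
      have "real_of_ereal (f p0) - 1 - 2 * norm (w - p0) / r \<le> real_of_ereal (f w)" using lin w unfolding D_def by blast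
      then have "\<gamma> * (real_of_ereal (f p0) - 1 - 2 * norm (w - p0) / r) \<le> \<gamma> * real_of_ereal (f w)"
        using g by (intro mult_left_mono) auto
      moreover have "\<gamma> * (real_of_ereal (f p0) - 1 - 2 * norm (w - p0) / r) = \<gamma> * (real_of_ereal (f p0) - 1) - a * norm (w - p0)"
        unfolding a_def by (simp add: algebra_simps)
      ultimately show ?thesis by simp
    qed
    have l2: "norm (w - p0) \<le> s + c"
    proof -
      have "norm (w - p0) = norm ((x - p0) - (x - w))" by simp
      then have "norm (w - p0) \<le> norm (x - p0) + norm (x - w)" using norm_triangle_ineq4[of "x - p0" "x - w"] by simp
      then show ?thesis unfolding s_def c_def by simp
    qed
    have l3: "s\<^sup>2/2 - a * s \<ge> - a\<^sup>2/2"
    proof -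
      have "0 \<le> (s - a)\<^sup>2" by simp
      then show ?thesis by (simp add: power2_diff field_simps)
    qed
    have "F w \<ge> \<gamma> * (real_of_ereal (f p0) - 1) - a * c - a\<^sup>2/2"
      unfolding F_def s_def[symmetric] by (rule aux_lb[OF l1 l2 a0 l3])
    then show "\<gamma> * (real_of_ereal (f p0) - 1) - a * c - a\<^sup>2/2 \<le> F w" by simp
  next
    fix c'
    have "closed {w \<in> {w. f w \<noteq> \<infinity>}. \<gamma> * real_of_ereal (f w) + (\<lambda>w. (norm (x - w))\<^sup>2 / 2) w \<le> c'}"
      by (rule lsc_plus_closed[OF pf lsc g]) (intro continuous_intros, simp)
    then show "closed {w \<in> D. F w \<le> c'}" unfolding D_def F_def by simp
  next
    fix u w assume u: "u \<in> D" and w: "w \<in> D"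
    have t: "(0::real) < 1/2" "(1::real)/2 < 1" by simp_all
    have em: "(1/2) *\<^sub>R (u + w) = (1/2) *\<^sub>R u + (1 - 1/2) *\<^sub>R w" by (simp add: scaleR_add_right)
    have cv: "f ((1/2) *\<^sub>R (u + w)) \<noteq> \<infinity> \<and> real_of_ereal (f ((1/2) *\<^sub>R (u + w))) \<le> 1/2 * real_of_ereal (f u) + (1 - 1/2) * real_of_ereal (f w)"
      unfolding em using convex_real[OF pf cf _ _ t, of u w] u w unfolding D_def by blast
    have m1: "\<gamma> * real_of_ereal (f ((1/2) *\<^sub>R (u + w))) \<le> \<gamma> * real_of_ereal (f u) / 2 + \<gamma> * real_of_ereal (f w) / 2"
    proof -
      have "\<gamma> * real_of_ereal (f ((1/2) *\<^sub>R (u + w))) \<le> \<gamma> * (1/2 * real_of_ereal (f u) + (1 - 1/2) * real_of_ereal (f w))"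
        using cv g by (intro mult_left_mono) auto
      then show ?thesis by (simp add: algebra_simps)
    qed
    have ex: "x - (1/2) *\<^sub>R (u + w) = (1/2) *\<^sub>R ((x - u) + (x - w))" by (simp add: algebra_simps half_half)
    have e1: "norm ((x - u) - (x - w)) = norm (u - w)" by (simp add: norm_minus_commute)
    have m2: "(norm (x - (1/2) *\<^sub>R (u + w)))\<^sup>2 = (norm (x - u))\<^sup>2/2 + (norm (x - w))\<^sup>2/2 - (norm (u - w))\<^sup>2/4"
      unfolding ex para_half e1 ..
    have "F ((1/2) *\<^sub>R (u + w)) \<le> ((\<gamma> * real_of_ereal (f u) + (norm (x - u))\<^sup>2/2) + (\<gamma> * real_of_ereal (f w) + (norm (x - w))\<^sup>2/2))/2 - (norm (u - w))\<^sup>2/8"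
      by (rule aux_mid[OF F_def m1 m2])
    then show "(1/2) *\<^sub>R (u + w) \<in> D \<and> F ((1/2) *\<^sub>R (u + w)) \<le> (F u + F w)/2 - (norm (u - w))\<^sup>2/8"
      using cv unfolding D_def F_def by simp
  qed
  then obtain p where pD: "p \<in> D" and pmin: "\<And>w. w \<in> D \<Longrightarrow> F p \<le> F w" by blast
  have "vi f \<gamma> x p"
    unfolding vi_def
  proof (intro conjI allI impI)
    show fp: "f p \<noteq> \<infinity>" using pD unfolding D_def by simp
    fix y assume fy: "f y \<noteq> \<infinity>"
    have "\<gamma> * real_of_ereal (f p) + inner (x - p) (y - p) \<le> \<gamma> * real_of_ereal (f y)"
    proof (rule small_t_le)
      fix t :: real assume t: "0 < t" "t < 1"
      define yt where "yt = t *\<^sub>R y + (1 - t) *\<^sub>R p"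
      have cv: "f yt \<noteq> \<infinity> \<and> real_of_ereal (f yt) \<le> t * real_of_ereal (f y) + (1 - t) * real_of_ereal (f p)"
        unfolding yt_def by (rule convex_real[OF pf cf fy fp t])
      have h1: "\<gamma> * real_of_ereal (f p) + (norm (x - p))\<^sup>2 / 2 \<le> \<gamma> * real_of_ereal (f yt) + (norm (x - yt))\<^sup>2 / 2"
        using pmin[of yt] cv unfolding F_def D_def by simp
      have h2: "\<gamma> * real_of_ereal (f yt) \<le> t * (\<gamma> * real_of_ereal (f y)) + (1 - t) * (\<gamma> * real_of_ereal (f p))"
      proof -
        have "\<gamma> * real_of_ereal (f yt) \<le> \<gamma> * (t * real_of_ereal (f y) + (1 - t) * real_of_ereal (f p))"
          using cv g by (intro mult_left_mono) auto
        then show ?thesis by (simp add: algebra_simps)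
      qed
      have h3: "(norm (x - yt))\<^sup>2 = (norm (x - p))\<^sup>2 - 2 * (t * inner (x - p) (y - p)) + t\<^sup>2 * (norm (y - p))\<^sup>2"
      proof -
        have e: "x - yt = (x - p) - t *\<^sub>R (y - p)" unfolding yt_def by (simp add: algebra_simps)
        have "(norm (x - yt))\<^sup>2 = (norm (x - p))\<^sup>2 - 2 * inner (x - p) (t *\<^sub>R (y - p)) + (norm (t *\<^sub>R (y - p)))\<^sup>2"
          unfolding e by (rule norm_diff_sq)
        then show ?thesis by (simp add: power_mult_distrib)
      qed
      show "\<gamma> * real_of_ereal (f p) + inner (x - p) (y - p) - t * ((norm (y - p))\<^sup>2 / 2) \<le> \<gamma> * real_of_ereal (f y)"
        by (rule aux_t[OF h1 h2 h3 t(1)])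
    qed
    then show "\<gamma> * real_of_ereal (f p) + inner (x - p) (y - p) \<le> \<gamma> * real_of_ereal (f y)" .
  qed
  then show ?thesis by blast
qed

lemma prox_vi:
  fixes f :: "'a::{real_inner,complete_space} \<Rightarrow> ereal"
  assumes pf: "proper_fun f" and cf: "convex_fun f" and lsc: "lsc_fun f" and g: "0 < \<gamma>"
  shows "vi f \<gamma> x (prox (\<lambda>y. ereal \<gamma> * f y) x)"
proof -
  obtain p where p: "vi f \<gamma> x p" using prox_exists[OF pf cf lsc g] by blast
  then show ?thesis using prox_unique[OF pf g p] by simp
qed


locale fbs =
  fixes f :: "'a::{real_inner,complete_space} \<Rightarrow> ereal" and g :: "'a \<Rightarrow> real" and G :: "'a \<Rightarrow> 'a"
    and \<beta> \<epsilon> :: real and \<gamma> lam :: "nat \<Rightarrow> real" and a b x :: "nat \<Rightarrow> 'a" and S :: "'a set"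
  assumes beta: "0 < \<beta>" and eps: "0 < \<epsilon>" "\<epsilon> < min (1/2) \<beta>"
    and pf: "proper_fun f" and lsc: "lsc_fun f" and cf: "convex_fun f"
    and g_convex: "convex_on UNIV g"
    and g_grad: "\<And>y. (g has_derivative (\<lambda>h. inner (G y) h)) (at y)"
    and G_lip: "\<And>y z. norm (G y - G z) \<le> (1 / \<beta>) * norm (y - z)"
    and S_def: "S = {z. \<forall>y. f z + ereal (g z) \<le> f y + ereal (g y)}"
    and S_ne: "S \<noteq> {}"
    and gamma: "\<And>n. \<epsilon> \<le> \<gamma> n \<and> \<gamma> n \<le> 2 * \<beta> / (1 + \<epsilon>)"
    and a_sum: "summable (\<lambda>n. norm (a n))"
    and b_sum: "summable (\<lambda>n. norm (b n))"
    and lam_bd: "\<And>n. \<epsilon> \<le> lam n \<and> lam n \<le> (1 - \<epsilon>) * (2 + \<epsilon> - \<gamma> n / (2 * \<beta>))"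
    and x_rec: "\<And>n. x (Suc n) = x n + lam n *\<^sub>R
        (prox (\<lambda>y. ereal (\<gamma> n) * f y) (x n - \<gamma> n *\<^sub>R (G (x n) + b n)) + a n - x n)"
begin

abbreviation fr where "fr y \<equiv> real_of_ereal (f y)"

lemma S_vi:
  assumes z: "z \<in> S"
  shows "f z \<noteq> \<infinity> \<and> (\<forall>y. f y \<noteq> \<infinity> \<longrightarrow> fr z - inner (G z) (y - z) \<le> fr y)"
proof -
  have zmin: "\<And>y. f z + ereal (g z) \<le> f y + ereal (g y)" using z unfolding S_def by blast
  obtain p0 where p0: "f p0 \<noteq> \<infinity>" using pf unfolding proper_fun_def by blast
  have fz: "f z \<noteq> \<infinity>"
  proof
    assume "f z = \<infinity>"
    then have "f p0 + ereal (g p0) = \<infinity>" using zmin[of p0] by simp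
    moreover have "f p0 + ereal (g p0) \<noteq> \<infinity>" by (subst f_fin[OF pf p0]) simp
    ultimately show False by simp
  qed
  have "fr z - inner (G z) (y - z) \<le> fr y" if fy: "f y \<noteq> \<infinity>" for y
  proof (rule small_t_le)
    fix t :: real assume t: "0 < t" "t < 1"
    define yt where "yt = t *\<^sub>R y + (1 - t) *\<^sub>R z"
    have cv: "f yt \<noteq> \<infinity> \<and> fr yt \<le> t * fr y + (1 - t) * fr z"
      unfolding yt_def by (rule convex_real[OF pf cf fy fz t])
    have m: "fr z + g z \<le> fr yt + g yt"
    proof -
      have "f z + ereal (g z) \<le> f yt + ereal (g yt)" by (rule zmin)
      then show ?thesis by (subst (asm) f_fin[OF pf fz], subst (asm) f_fin[OF pf conjunct1[OF cv]]) simp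
    qed
    have ytz: "yt - z = t *\<^sub>R (y - z)" unfolding yt_def by (simp add: algebra_simps)
    have d: "g yt \<le> g z + inner (G z) (yt - z) + (norm (yt - z))\<^sup>2 / (2 * \<beta>)"
      by (rule descent[OF g_grad G_lip beta])
    have d2: "g yt \<le> g z + t * inner (G z) (y - z) + t * (t * ((norm (y - z))\<^sup>2 / (2 * \<beta>)))"
    proof -
      have n2: "(norm (yt - z))\<^sup>2 / (2 * \<beta>) = t * (t * ((norm (y - z))\<^sup>2 / (2 * \<beta>)))"
        unfolding ytz using t by (simp add: power_mult_distrib power2_eq_square)
      have i2: "inner (G z) (yt - z) = t * inner (G z) (y - z)" unfolding ytz by simp
      show ?thesis using d unfolding n2 i2 by simp
    qed
    have "t * (fr z - inner (G z) (y - z) - t * ((norm (y - z))\<^sup>2 / (2 * \<beta>))) \<le> t * fr y"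
    proof -
      have "t * (fr z - inner (G z) (y - z) - t * ((norm (y - z))\<^sup>2 / (2 * \<beta>)))
          = t * fr z - t * inner (G z) (y - z) - t * (t * ((norm (y - z))\<^sup>2 / (2 * \<beta>)))"
        by (simp add: algebra_simps)
      moreover have "(1 - t) * fr z = fr z - t * fr z" by (simp add: algebra_simps)
      ultimately show ?thesis using m cv d2 by argo
    qed
    then show "fr z - inner (G z) (y - z) - t * ((norm (y - z))\<^sup>2 / (2 * \<beta>)) \<le> fr y"
      using t by simp
  qed
  then show ?thesis using fz by blast
qed

lemma S_of:
  assumes fz: "f z \<noteq> \<infinity>" and h: "\<And>y. f y \<noteq> \<infinity> \<Longrightarrow> fr z - inner (G z) (y - z) \<le> fr y"
  shows "z \<in> S"
  unfolding S_def
proof (intro CollectI allI)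
  fix y
  show "f z + ereal (g z) \<le> f y + ereal (g y)"
  proof (cases "f y = \<infinity>")
    case True then show ?thesis by simp
  next
    case False
    have "g z + inner (G z) (y - z) \<le> g y" by (rule above_tangent[OF g_convex g_grad])
    then have "fr z + g z \<le> fr y + g y" using h[OF False] by linarith
    then show ?thesis by (subst f_fin[OF pf fz], subst f_fin[OF pf False]) simp
  qed
qed

lemma S_fixed:
  assumes z: "z \<in> S" and g0: "0 < c"
  shows "vi f c (z - c *\<^sub>R G z) z"
  unfolding vi_def
proof (intro conjI allI impI)
  show "f z \<noteq> \<infinity>" using S_vi[OF z] by blast
  fix y assume fy: "f y \<noteq> \<infinity>"
  have "fr z - inner (G z) (y - z) \<le> fr y" using S_vi[OF z] fy by blast
  then have "c * (fr z - inner (G z) (y - z)) \<le> c * fr y" using g0 by (intro mult_left_mono) auto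
  then show "c * fr z + inner (z - c *\<^sub>R G z - z) (y - z) \<le> c * fr y" by (simp add: algebra_simps)
qed

lemma vi_S:
  assumes v: "vi f 1 (z - G z) z"
  shows "z \<in> S"
proof (rule S_of)
  show "f z \<noteq> \<infinity>" using v unfolding vi_def by blast
  fix y assume "f y \<noteq> \<infinity>"
  then have "1 * fr z + inner (z - G z - z) (y - z) \<le> 1 * fr y" using v unfolding vi_def by blast
  then show "fr z - inner (G z) (y - z) \<le> fr y" by simp
qed

end



lemma aux_fej:
  fixes E N0 L I1 I2 A2 g \<beta> W2 W A :: real
  assumes e: "E = N0 + 2*L*I2 + L^2*A2" and i: "I2 = I1 - A2" and m: "L*I1 \<le> L*(-g*\<beta>*W2 + g*W*A)"
  shows "E \<le> N0 - L*((2-L)*A2 - 2*g*W*A + 2*g*\<beta>*W2)"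
proof -
  have e1: "E = N0 + 2*(L*I1) - 2*(L*A2) + L^2*A2" unfolding e i by (simp add: algebra_simps)
  have e2: "N0 - L*((2-L)*A2 - 2*g*W*A + 2*g*\<beta>*W2) = N0 + 2*(L*(-g*\<beta>*W2 + g*W*A)) - 2*(L*A2) + L^2*A2"
    by (simp add: algebra_simps power2_eq_square)
  show ?thesis unfolding e1 e2 using m by linarith
qed

lemma Q_bounds:
  fixes \<beta> \<epsilon> g L A W :: real
  assumes b: "0 < \<beta>" and e: "0 < \<epsilon>" and g1: "\<epsilon> \<le> g" and g2: "g \<le> 2 * \<beta> / (1 + \<epsilon>)"
    and L: "L \<le> (1 - \<epsilon>) * (2 + \<epsilon> - g / (2 * \<beta>))" and A: "0 \<le> A" and W: "0 \<le> W"
  shows "\<epsilon>\<^sup>2 * A\<^sup>2 \<le> (2 - L) * A\<^sup>2 - 2 * g * W * A + 2 * g * \<beta> * W\<^sup>2"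
    and "2 * \<beta>\<^sup>2 * min (\<epsilon>\<^sup>2) (\<epsilon> / (2 * \<beta>)) * W\<^sup>2 \<le> (2 - L) * A\<^sup>2 - 2 * g * W * A + 2 * g * \<beta> * W\<^sup>2"
proof -
  define \<delta> where "\<delta> = g / (2 * \<beta>)"
  have gd: "g = 2 * \<beta> * \<delta>" unfolding \<delta>_def using b by simp
  have d1: "\<delta> \<le> 1"
  proof -
    have "2 * \<beta> \<le> 2 * \<beta> * (1 + \<epsilon>)" using b e by simp
    then have "2 * \<beta> / (1 + \<epsilon>) \<le> 2 * \<beta>" using e by (simp add: divide_le_eq)
    then have "g \<le> 2 * \<beta>" using g2 by linarith
    then show ?thesis unfolding \<delta>_def using b by simp
  qed
  have d0: "\<epsilon> / (2 * \<beta>) \<le> \<delta>" unfolding \<delta>_def using b g1 by (simp add: divide_right_mono)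
  have Qid: "(2 - L) * A\<^sup>2 - 2 * g * W * A + 2 * g * \<beta> * W\<^sup>2 = (2 - L - \<delta>) * A\<^sup>2 + \<delta> * (A - 2 * \<beta> * W)\<^sup>2"
    unfolding gd by (simp add: algebra_simps power2_eq_square)
  have c1: "\<epsilon>\<^sup>2 \<le> 2 - L - \<delta>"
  proof -
    have "2 - \<delta> - (1 - \<epsilon>) * (2 + \<epsilon> - \<delta>) = \<epsilon>\<^sup>2 + \<epsilon> * (1 - \<delta>)"
      by (simp add: algebra_simps power2_eq_square)
    moreover have "0 \<le> \<epsilon> * (1 - \<delta>)" using e d1 by simp
    ultimately show ?thesis using L unfolding \<delta>_def by linarith
  qed
  have "0 < \<epsilon> / (2 * \<beta>)" using e b by simp
  then have dpos: "0 \<le> \<delta>" using d0 by linarith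
  have q1: "\<epsilon>\<^sup>2 * A\<^sup>2 \<le> (2 - L - \<delta>) * A\<^sup>2" using c1 by (intro mult_right_mono) auto
  have q2: "0 \<le> \<delta> * (A - 2 * \<beta> * W)\<^sup>2" using dpos by simp
  show "\<epsilon>\<^sup>2 * A\<^sup>2 \<le> (2 - L) * A\<^sup>2 - 2 * g * W * A + 2 * g * \<beta> * W\<^sup>2" unfolding Qid using q1 q2 by linarith
  define m where "m = min (\<epsilon>\<^sup>2) (\<epsilon> / (2 * \<beta>))"
  have m1: "m \<le> \<epsilon>\<^sup>2" "m \<le> \<delta>" "0 \<le> m" unfolding m_def using d0 e b by auto
  have r1: "m * A\<^sup>2 \<le> (2 - L - \<delta>) * A\<^sup>2" using m1 c1 by (intro mult_right_mono) auto
  have r2: "m * (A - 2 * \<beta> * W)\<^sup>2 \<le> \<delta> * (A - 2 * \<beta> * W)\<^sup>2" using m1 by (intro mult_right_mono) auto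
  have r3: "2 * \<beta>\<^sup>2 * W\<^sup>2 \<le> A\<^sup>2 + (A - 2 * \<beta> * W)\<^sup>2"
  proof -
    have "0 \<le> (A - (A - 2 * \<beta> * W) - (A + (A - 2 * \<beta> * W)))\<^sup>2 / 4" by simp
    have "(2 * \<beta> * W)\<^sup>2 \<le> 2 * A\<^sup>2 + 2 * (A - 2 * \<beta> * W)\<^sup>2"
    proof -
      have "0 \<le> (2 * A - 2 * \<beta> * W)\<^sup>2" by simp
      moreover have "2 * A\<^sup>2 + 2 * (A - 2 * \<beta> * W)\<^sup>2 - (2 * \<beta> * W)\<^sup>2 = (2 * A - 2 * \<beta> * W)\<^sup>2"
        by (simp add: algebra_simps power2_eq_square)
      ultimately show ?thesis by linarith
    qed
    moreover have "(2 * \<beta> * W)\<^sup>2 = 2 * (2 * \<beta>\<^sup>2 * W\<^sup>2)" by (simp add: power2_eq_square)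
    ultimately show ?thesis by linarith
  qed
  have "m * (2 * \<beta>\<^sup>2 * W\<^sup>2) \<le> m * (A\<^sup>2 + (A - 2 * \<beta> * W)\<^sup>2)" using m1 r3 by (intro mult_left_mono) auto
  then have "2 * \<beta>\<^sup>2 * m * W\<^sup>2 \<le> m * A\<^sup>2 + m * (A - 2 * \<beta> * W)\<^sup>2" by (simp add: algebra_simps)
  then show "2 * \<beta>\<^sup>2 * min (\<epsilon>\<^sup>2) (\<epsilon> / (2 * \<beta>)) * W\<^sup>2 \<le> (2 - L) * A\<^sup>2 - 2 * g * W * A + 2 * g * \<beta> * W\<^sup>2"
    unfolding Qid m_def[symmetric] using r1 r2 by linarith
qed

context fbs begin

definition "pp n = prox (\<lambda>y. ereal (\<gamma> n) * f y) (x n - \<gamma> n *\<^sub>R G (x n))"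
definition "qq n = prox (\<lambda>y. ereal (\<gamma> n) * f y) (x n - \<gamma> n *\<^sub>R (G (x n) + b n))"
definition "xe n = x n + lam n *\<^sub>R (pp n - x n)"
definition "err n = lam n * (\<gamma> n * norm (b n) + norm (a n))"
definition "QQ z n = (2 - lam n) * (norm (pp n - x n))\<^sup>2 - 2 * \<gamma> n * norm (G (x n) - G z) * norm (pp n - x n)
    + 2 * \<gamma> n * \<beta> * (norm (G (x n) - G z))\<^sup>2"
definition "kap = 2 * \<beta>\<^sup>2 * min (\<epsilon>\<^sup>2) (\<epsilon> / (2 * \<beta>))"

lemma gpos: "0 < \<gamma> n" using gamma[of n] eps by linarith
lemma lpos: "0 < lam n" using lam_bd[of n] eps by linarith
lemma gle: "\<gamma> n \<le> 2 * \<beta>"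
proof -
  have "2 * \<beta> \<le> 2 * \<beta> * (1 + \<epsilon>)" using beta eps by simp
  then have "2 * \<beta> / (1 + \<epsilon>) \<le> 2 * \<beta>" using eps by (simp add: divide_le_eq)
  then show ?thesis using gamma[of n] by linarith
qed
lemma lle: "lam n \<le> 3"
proof -
  have h: "0 \<le> \<gamma> n / (2 * \<beta>)" using gpos[of n] beta by simp
  have "(1 - \<epsilon>) * (2 + \<epsilon> - \<gamma> n / (2 * \<beta>)) \<le> 1 * (2 + \<epsilon>)"
  proof (rule mult_mono)
    show "1 - \<epsilon> \<le> 1" using eps by simp
    show "2 + \<epsilon> - \<gamma> n / (2 * \<beta>) \<le> 2 + \<epsilon>" using h by simp
    show "(0::real) \<le> 1" by simp
    have "\<gamma> n / (2 * \<beta>) \<le> 1" using gle[of n] beta by simp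
    then show "0 \<le> 2 + \<epsilon> - \<gamma> n / (2 * \<beta>)" using eps by linarith
  qed
  then show ?thesis using lam_bd[of n] eps by simp
qed

lemma vi_pp: "vi f (\<gamma> n) (x n - \<gamma> n *\<^sub>R G (x n)) (pp n)"
  unfolding pp_def by (rule prox_vi[OF pf cf lsc gpos])
lemma vi_qq: "vi f (\<gamma> n) (x n - \<gamma> n *\<^sub>R (G (x n) + b n)) (qq n)"
  unfolding qq_def by (rule prox_vi[OF pf cf lsc gpos])

lemma x_step: "x (Suc n) = xe n + lam n *\<^sub>R ((qq n - pp n) + a n)"
  unfolding x_rec xe_def qq_def[symmetric] by (simp add: algebra_simps)

lemma err_bd: "norm (x (Suc n) - xe n) \<le> err n"
proof -
  have "norm (qq n - pp n) \<le> norm ((x n - \<gamma> n *\<^sub>R (G (x n) + b n)) - (x n - \<gamma> n *\<^sub>R G (x n)))"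
    by (rule vi_nonexp[OF vi_qq vi_pp])
  also have "\<dots> = \<gamma> n * norm (b n)" using gpos[of n] by (simp add: algebra_simps)
  finally have qp: "norm (qq n - pp n) \<le> \<gamma> n * norm (b n)" .
  have "norm (x (Suc n) - xe n) = lam n * norm ((qq n - pp n) + a n)" unfolding x_step using lpos[of n] by simp
  also have "\<dots> \<le> lam n * (\<gamma> n * norm (b n) + norm (a n))"
    using lpos[of n] qp norm_triangle_ineq[of "qq n - pp n" "a n"] by (intro mult_left_mono) auto
  finally show ?thesis unfolding err_def .
qed

lemma err_nonneg: "0 \<le> err n"
  unfolding err_def using lpos[of n] gpos[of n] by simp

lemma err_sum: "summable err"
proof (rule summable_comparison_test'[where g="\<lambda>n. 3 * (2 * \<beta> * norm (b n) + norm (a n))"])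
  show "summable (\<lambda>n. 3 * (2 * \<beta> * norm (b n) + norm (a n)))"
    using a_sum b_sum by (intro summable_mult summable_add) auto
  fix n
  have "err n \<le> 3 * (2 * \<beta> * norm (b n) + norm (a n))"
    unfolding err_def
  proof (rule mult_mono)
    show "lam n \<le> 3" by (rule lle)
    show "\<gamma> n * norm (b n) + norm (a n) \<le> 2 * \<beta> * norm (b n) + norm (a n)"
      using gle[of n] by (simp add: mult_right_mono)
    show "0 \<le> (3::real)" by simp
    show "0 \<le> \<gamma> n * norm (b n) + norm (a n)" using gpos[of n] by simp
  qed
  then show "norm (err n) \<le> 3 * (2 * \<beta> * norm (b n) + norm (a n))" using err_nonneg[of n] by simp
qed

lemma fejer_core:
  assumes z: "z \<in> S"
  shows "(norm (xe n - z))\<^sup>2 \<le> (norm (x n - z))\<^sup>2 - lam n * QQ z n"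
proof -
  define p where "p = pp n"
  define d where "d = p - x n"
  define c where "c = \<gamma> n"
  define W where "W = norm (G (x n) - G z)"
  define A where "A = norm d"
  have c0: "0 < c" unfolding c_def by (rule gpos)
  have v1: "c * fr p + inner (x n - c *\<^sub>R G (x n) - p) (z - p) \<le> c * fr z"
    using vi_pp[of n] S_vi[OF z] unfolding vi_def p_def c_def by blast
  have v2: "c * fr z + inner (z - c *\<^sub>R G z - z) (p - z) \<le> c * fr p"
    using S_fixed[OF z c0] vi_pp[of n] unfolding vi_def p_def by blast
  have s1: "inner (x n - c *\<^sub>R G (x n) - p) (z - p) + inner (z - c *\<^sub>R G z - z) (p - z) \<le> 0"
    using v1 v2 by linarith
  have id1: "inner (x n - c *\<^sub>R G (x n) - p) (z - p) + inner (z - c *\<^sub>R G z - z) (p - z)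
      = inner d (p - z) + c * inner (G (x n) - G z) (p - z)"
    unfolding d_def by (simp add: inner_diff_left inner_diff_right algebra_simps)
  have id2: "inner (G (x n) - G z) (p - z) = inner (G (x n) - G z) (x n - z) + inner (G (x n) - G z) d"
    unfolding d_def by (simp add: inner_diff_right)
  have coco: "\<beta> * W\<^sup>2 \<le> inner (G (x n) - G z) (x n - z)"
    unfolding W_def by (rule cocoercive[OF g_convex g_grad G_lip beta])
  have cs: "- (W * A) \<le> inner (G (x n) - G z) d"
    using Cauchy_Schwarz_ineq2[of "G (x n) - G z" d] unfolding W_def A_def by linarith
  have "\<beta> * W\<^sup>2 - W * A \<le> inner (G (x n) - G z) (p - z)" using coco cs id2 by linarith
  then have "c * (\<beta> * W\<^sup>2 - W * A) \<le> c * inner (G (x n) - G z) (p - z)" using c0 by (intro mult_left_mono) auto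
  then have I1: "inner d (p - z) \<le> - c * \<beta> * W\<^sup>2 + c * W * A"
    using s1 id1 by (simp add: algebra_simps)
  have I1': "lam n * inner d (p - z) \<le> lam n * (- c * \<beta> * W\<^sup>2 + c * W * A)"
    using I1 lpos[of n] by (intro mult_left_mono) auto
  have xe: "xe n - z = (x n - z) + lam n *\<^sub>R d" unfolding xe_def d_def p_def by simp
  have E: "(norm (xe n - z))\<^sup>2 = (norm (x n - z))\<^sup>2 + 2 * lam n * inner (x n - z) d + (lam n)\<^sup>2 * A\<^sup>2"
    unfolding xe norm_add_sq A_def by (simp add: power_mult_distrib)
  have I2: "inner (x n - z) d = inner d (p - z) - A\<^sup>2"
    unfolding d_def A_def by (simp add: inner_diff_left inner_diff_right inner_commute power2_norm_eq_inner algebra_simps)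
  have "(norm (xe n - z))\<^sup>2 \<le> (norm (x n - z))\<^sup>2 - lam n * ((2 - lam n) * A\<^sup>2 - 2 * c * W * A + 2 * c * \<beta> * W\<^sup>2)"
    by (rule aux_fej[OF E I2 I1'])
  moreover have "QQ z n = (2 - lam n) * A\<^sup>2 - 2 * c * W * A + 2 * c * \<beta> * W\<^sup>2"
    unfolding QQ_def A_def W_def c_def d_def p_def by (simp add: algebra_simps)
  ultimately show ?thesis by simp
qed

lemma QQ_lower1: "\<epsilon>\<^sup>2 * (norm (pp n - x n))\<^sup>2 \<le> QQ z n"
proof -
  have "\<epsilon>\<^sup>2 * (norm (pp n - x n))\<^sup>2 \<le> (2 - lam n) * (norm (pp n - x n))\<^sup>2 - 2 * \<gamma> n * norm (G (x n) - G z) * norm (pp n - x n)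
    + 2 * \<gamma> n * \<beta> * (norm (G (x n) - G z))\<^sup>2"
    using Q_bounds(1)[OF beta eps(1)] gamma[of n] lam_bd[of n] by auto
  then show ?thesis unfolding QQ_def .
qed

lemma QQ_lower2: "kap * (norm (G (x n) - G z))\<^sup>2 \<le> QQ z n"
proof -
  have "kap * (norm (G (x n) - G z))\<^sup>2 \<le> (2 - lam n) * (norm (pp n - x n))\<^sup>2 - 2 * \<gamma> n * norm (G (x n) - G z) * norm (pp n - x n)
    + 2 * \<gamma> n * \<beta> * (norm (G (x n) - G z))\<^sup>2"
    unfolding kap_def using Q_bounds(2)[OF beta eps(1)] gamma[of n] lam_bd[of n] by auto
  then show ?thesis unfolding QQ_def .
qed

lemma QQ_nonneg: "0 \<le> QQ z n"
  using QQ_lower1[of n z] by (meson order_trans zero_le_mult_iff zero_le_power2)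

lemma kap_pos: "0 < kap" unfolding kap_def using beta eps by simp

end


lemma aux_sq: "(0::real) \<le> u \<Longrightarrow> u \<le> N \<Longrightarrow> N \<le> M \<Longrightarrow> 0 \<le> e \<Longrightarrow> v \<le> u + e \<Longrightarrow> 0 \<le> v \<Longrightarrow>
   v\<^sup>2 \<le> u\<^sup>2 + 2 * M * e + e\<^sup>2"
proof -
  assume h: "0 \<le> u" "u \<le> N" "N \<le> M" "0 \<le> e" "v \<le> u + e" "0 \<le> v"
  have "v\<^sup>2 \<le> (u + e)\<^sup>2" using h by (intro power_mono) auto
  also have "\<dots> = u\<^sup>2 + 2 * (u * e) + e\<^sup>2" by (simp add: power2_eq_square algebra_simps)
  also have "u * e \<le> M * e" using h by (intro mult_right_mono) auto
  then have "u\<^sup>2 + 2 * (u * e) + e\<^sup>2 \<le> u\<^sup>2 + 2 * M * e + e\<^sup>2" by simp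
  finally show ?thesis .
qed

context fbs begin

lemma xe_le: assumes z: "z \<in> S" shows "norm (xe n - z) \<le> norm (x n - z)"
proof -
  have "0 \<le> lam n * QQ z n" using lpos[of n] QQ_nonneg[of z n] by simp
  then have "(norm (xe n - z))\<^sup>2 \<le> (norm (x n - z))\<^sup>2" using fejer_core[OF z, of n] by linarith
  then show ?thesis by (rule power2_le_imp_le) simp
qed

lemma step_bd: assumes z: "z \<in> S" shows "norm (x (Suc n) - z) \<le> norm (x n - z) + err n"
proof -
  have "norm (x (Suc n) - z) \<le> norm (xe n - z) + norm (x (Suc n) - xe n)"
    using norm_triangle_ineq[of "xe n - z" "x (Suc n) - xe n"] by simp
  then show ?thesis using xe_le[OF z, of n] err_bd[of n] by linarith
qed

lemma conv_dist: assumes z: "z \<in> S" shows "convergent (\<lambda>n. norm (x n - z))"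
  by (rule quasi_fejer_conv[OF _ err_nonneg err_sum step_bd[OF z]]) simp

lemma bdd_dist: assumes z: "z \<in> S" obtains M where "\<And>n. norm (x n - z) \<le> M"
proof -
  have "Bseq (\<lambda>n. norm (x n - z))" using conv_dist[OF z] by (rule convergent_imp_Bseq)
  then obtain M where "\<And>n. norm (norm (x n - z)) \<le> M" using BseqE by metis
  then have "\<And>n. norm (x n - z) \<le> M" by simp
  then show ?thesis by (rule that)
qed

lemma sq_step:
  assumes z: "z \<in> S" and M: "\<And>n. norm (x n - z) \<le> M"
  shows "(norm (x (Suc n) - z))\<^sup>2 \<le> (norm (x n - z))\<^sup>2 - \<epsilon> * QQ z n + (2 * M * err n + (err n)\<^sup>2)"
proof -
  have s: "norm (x (Suc n) - z) \<le> norm (xe n - z) + err n"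
    using norm_triangle_ineq[of "xe n - z" "x (Suc n) - xe n"] err_bd[of n] by simp
  have a: "(norm (x (Suc n) - z))\<^sup>2 \<le> (norm (xe n - z))\<^sup>2 + 2 * M * err n + (err n)\<^sup>2"
    by (rule aux_sq[OF norm_ge_zero xe_le[OF z] M err_nonneg s norm_ge_zero])
  have "\<epsilon> * QQ z n \<le> lam n * QQ z n" using lam_bd[of n] QQ_nonneg[of z n] by (intro mult_right_mono) auto
  then show ?thesis using a fejer_core[OF z, of n] by linarith
qed

lemma err2_sum: "summable (\<lambda>n. (err n)\<^sup>2)"
proof (rule summable_comparison_test'[where g="\<lambda>n. suminf err * err n"])
  show "summable (\<lambda>n. suminf err * err n)" using err_sum by (rule summable_mult)
  fix n
  have "err n \<le> suminf err"
  proof -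
    have "(\<Sum>k<Suc n. err k) \<le> suminf err" by (rule sum_le_suminf[OF err_sum]) (auto intro: err_nonneg)
    moreover have "err n \<le> (\<Sum>k<Suc n. err k)" using err_nonneg by (simp add: sum_nonneg)
    ultimately show ?thesis by linarith
  qed
  then have "err n * err n \<le> suminf err * err n" using err_nonneg[of n] by (intro mult_right_mono) auto
  then show "norm ((err n)\<^sup>2) \<le> suminf err * err n" by (simp add: power2_eq_square)
qed

lemma QQ_sum: assumes z: "z \<in> S" shows "summable (QQ z)"
proof -
  obtain M where M: "\<And>n. norm (x n - z) \<le> M" using bdd_dist[OF z] by blast
  have M0: "0 \<le> M" using M[of 0] norm_ge_zero order_trans by blast
  have "summable (\<lambda>n. \<epsilon> * QQ z n)"
  proof (rule telescope_summable[where a="\<lambda>n. (norm (x n - z))\<^sup>2" and d="\<lambda>n. 2 * M * err n + (err n)\<^sup>2"])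
    show "\<And>n. 0 \<le> (norm (x n - z))\<^sup>2" by simp
    show "\<And>n. 0 \<le> \<epsilon> * QQ z n" using eps QQ_nonneg by simp
    show "\<And>n. 0 \<le> 2 * M * err n + (err n)\<^sup>2" using M0 err_nonneg by simp
    show "summable (\<lambda>n. 2 * M * err n + (err n)\<^sup>2)" using err_sum err2_sum by (intro summable_add summable_mult)
    show "\<And>n. (norm (x (Suc n) - z))\<^sup>2 \<le> (norm (x n - z))\<^sup>2 - \<epsilon> * QQ z n + (2 * M * err n + (err n)\<^sup>2)"
      by (rule sq_step[OF z M])
  qed
  then have "summable (\<lambda>n. (1 / \<epsilon>) * (\<epsilon> * QQ z n))" by (rule summable_mult)
  then show ?thesis using eps by simp
qed

lemma part_i: "summable (\<lambda>n. (norm (pp n - x n))\<^sup>2)"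
proof -
  obtain z where z: "z \<in> S" using S_ne by blast
  show ?thesis
  proof (rule summable_comparison_test'[where g="\<lambda>n. (1 / \<epsilon>\<^sup>2) * QQ z n"])
    show "summable (\<lambda>n. (1 / \<epsilon>\<^sup>2) * QQ z n)" using QQ_sum[OF z] by (rule summable_mult)
    fix n
    have "\<epsilon>\<^sup>2 * (norm (pp n - x n))\<^sup>2 \<le> QQ z n" by (rule QQ_lower1)
    then have "(norm (pp n - x n))\<^sup>2 \<le> (1 / \<epsilon>\<^sup>2) * QQ z n" using eps by (simp add: field_simps)
    then show "norm ((norm (pp n - x n))\<^sup>2) \<le> (1 / \<epsilon>\<^sup>2) * QQ z n" by simp
  qed
qed

lemma part_ii: assumes z: "z \<in> S" shows "summable (\<lambda>n. (norm (G (x n) - G z))\<^sup>2)"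
proof -
  show ?thesis
  proof (rule summable_comparison_test'[where g="\<lambda>n. (1 / kap) * QQ z n"])
    show "summable (\<lambda>n. (1 / kap) * QQ z n)" using QQ_sum[OF z] by (rule summable_mult)
    fix n
    have "kap * (norm (G (x n) - G z))\<^sup>2 \<le> QQ z n" by (rule QQ_lower2)
    then have "(norm (G (x n) - G z))\<^sup>2 \<le> (1 / kap) * QQ z n" using kap_pos by (simp add: field_simps)
    then show "norm ((norm (G (x n) - G z))\<^sup>2) \<le> (1 / kap) * QQ z n" by simp
  qed
qed

end


lemma lim0_bound:
  fixes f :: "nat \<Rightarrow> 'b::real_normed_vector" and g :: "nat \<Rightarrow> real"
  assumes "\<And>n. norm (f n) \<le> K * g n" "g \<longlonglongrightarrow> 0"
  shows "f \<longlonglongrightarrow> 0"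
proof (rule Lim_null_comparison)
  show "\<forall>\<^sub>F n in sequentially. norm (f n) \<le> K * g n" using assms(1) by simp
  show "(\<lambda>n. K * g n) \<longlonglongrightarrow> 0" using tendsto_mult_right_zero[OF assms(2)] by simp
qed

lemma sq_summable_norm0:
  fixes h :: "nat \<Rightarrow> 'b::real_normed_vector"
  assumes "summable (\<lambda>n. (norm (h n))\<^sup>2)"
  shows "(\<lambda>n. norm (h n)) \<longlonglongrightarrow> 0"
proof -
  have "(\<lambda>n. (norm (h n))\<^sup>2) \<longlonglongrightarrow> 0" using assms by (rule summable_LIMSEQ_zero)
  then have "(\<lambda>n. sqrt ((norm (h n))\<^sup>2)) \<longlonglongrightarrow> sqrt 0" by (rule tendsto_real_sqrt)
  then show ?thesis by simp
qed

context fbs begin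

lemma px0: "(\<lambda>n. pp n - x n) \<longlonglongrightarrow> 0"
  using sq_summable_norm0[OF part_i] by (simp add: tendsto_norm_zero_iff)

lemma Gconv: assumes z: "z \<in> S" shows "(\<lambda>n. G (x n)) \<longlonglongrightarrow> G z"
proof -
  have "(\<lambda>n. G (x n) - G z) \<longlonglongrightarrow> 0"
    using sq_summable_norm0[OF part_ii[OF z]] by (simp add: tendsto_norm_zero_iff)
  then show ?thesis by (simp add: LIM_zero_iff)
qed

lemma x_bdd: obtains B where "\<And>n. norm (x n) \<le> B"
proof -
  obtain z where z: "z \<in> S" using S_ne by blast
  obtain M where M: "\<And>n. norm (x n - z) \<le> M" using bdd_dist[OF z] by blast
  have "norm (x n) \<le> M + norm z" for n using M[of n] norm_triangle_ineq[of "x n - z" z] by simp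
  then show ?thesis by (rule that)
qed

lemma px_bdd: obtains C where "\<And>n. norm (pp n - x n) \<le> C"
proof -
  have "Bseq (\<lambda>n. pp n - x n)" using px0 by (intro convergent_imp_Bseq) (auto simp: convergent_def)
  then obtain C where "\<And>n. norm (pp n - x n) \<le> C" using BseqE by metis
  then show ?thesis by (rule that)
qed

lemma wk_inner:
  assumes "weakly_converges y z" shows "(\<lambda>n. inner w (y n)) \<longlonglongrightarrow> inner w z"
  using assms unfolding weakly_converges_def by (simp add: inner_commute)

lemma cluster_in_S:
  assumes r: "strict_mono r" and wz: "weakly_converges (x \<circ> r) z"
  shows "z \<in> S"
proof -
  obtain z0 where z0: "z0 \<in> S" using S_ne by blast
  define v where "v = G z0"
  have Gv: "(\<lambda>n. G (x n)) \<longlonglongrightarrow> v" unfolding v_def by (rule Gconv[OF z0])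
  have Gvr: "(\<lambda>k. G (x (r k))) \<longlonglongrightarrow> v" using LIMSEQ_subseq_LIMSEQ[OF Gv r] by (simp add: o_def)
  obtain B where B: "\<And>n. norm (x n) \<le> B" using x_bdd by blast
  obtain C where C: "\<And>n. norm (pp n - x n) \<le> C" using px_bdd by blast
  have wzr: "\<And>w. (\<lambda>k. inner w (x (r k))) \<longlonglongrightarrow> inner w z" using wk_inner[OF wz] by (simp add: o_def)
  have Gz: "G z = v"
  proof -
    have lhs: "(\<lambda>k. \<beta> * (norm (G (x (r k)) - G z))\<^sup>2) \<longlonglongrightarrow> \<beta> * (norm (v - G z))\<^sup>2"
      by (intro tendsto_intros Gvr)
    have t1: "(\<lambda>k. inner (G (x (r k)) - v) (x (r k) - z)) \<longlonglongrightarrow> 0"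
    proof (rule lim0_bound[where K="B + norm z"])
      fix k
      have "norm (inner (G (x (r k)) - v) (x (r k) - z)) \<le> norm (G (x (r k)) - v) * norm (x (r k) - z)"
        using Cauchy_Schwarz_ineq2 by simp
      also have "\<dots> \<le> norm (G (x (r k)) - v) * (B + norm z)"
        using B[of "r k"] norm_triangle_ineq4[of "x (r k)" z] by (intro mult_left_mono) auto
      finally show "norm (inner (G (x (r k)) - v) (x (r k) - z)) \<le> (B + norm z) * norm (G (x (r k)) - v)"
        by (simp add: mult.commute)
      show "(\<lambda>k. norm (G (x (r k)) - v)) \<longlonglongrightarrow> 0"
        using Gvr by (simp add: tendsto_norm_zero_iff LIM_zero_iff)
    qed
    have t2: "(\<lambda>k. inner (v - G z) (x (r k) - z)) \<longlonglongrightarrow> 0"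
    proof -
      have "(\<lambda>k. inner (v - G z) (x (r k)) - inner (v - G z) z) \<longlonglongrightarrow> inner (v - G z) z - inner (v - G z) z"
        by (intro tendsto_diff wzr tendsto_const)
      then show ?thesis by (simp add: inner_diff_right)
    qed
    have rhs: "(\<lambda>k. inner (G (x (r k)) - G z) (x (r k) - z)) \<longlonglongrightarrow> 0"
    proof -
      have "(\<lambda>k. inner (G (x (r k)) - v) (x (r k) - z) + inner (v - G z) (x (r k) - z)) \<longlonglongrightarrow> 0 + 0"
        by (intro tendsto_add t1 t2)
      moreover have "\<And>k. inner (G (x (r k)) - v) (x (r k) - z) + inner (v - G z) (x (r k) - z)
                      = inner (G (x (r k)) - G z) (x (r k) - z)"
        by (simp add: inner_diff_left)
      ultimately show ?thesis by simp
    qed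
    have "\<beta> * (norm (v - G z))\<^sup>2 \<le> 0"
    proof (rule tendsto_le[OF trivial_limit_sequentially rhs lhs])
      show "\<forall>\<^sub>F k in sequentially. \<beta> * (norm (G (x (r k)) - G z))\<^sup>2 \<le> inner (G (x (r k)) - G z) (x (r k) - z)"
        by (intro always_eventually allI cocoercive[OF g_convex g_grad G_lip beta])
    qed
    then have "(norm (v - G z))\<^sup>2 \<le> 0" using beta by (simp add: mult_le_0_iff)
    then show ?thesis by simp
  qed
  define p' where "p' = prox (\<lambda>y. ereal 1 * f y) (z - G z)"
  have vp': "vi f 1 (z - G z) p'" unfolding p'_def by (rule prox_vi[OF pf cf lsc]) simp
  define u where "u = z - G z - p'"
  define un where "un n = (1 / \<gamma> n) *\<^sub>R (x n - pp n) - G (x n)" for n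
  have mono: "0 \<le> inner (u - un n) (p' - pp n)" for n
  proof -
    have fpp: "f (pp n) \<noteq> \<infinity>" using vi_pp[of n] unfolding vi_def by blast
    have fp': "f p' \<noteq> \<infinity>" using vp' unfolding vi_def by blast
    have a1: "1 * fr p' + inner u (pp n - p') \<le> 1 * fr (pp n)"
      using vp' fpp unfolding vi_def u_def by blast
    have a2: "\<gamma> n * fr (pp n) + inner (x n - \<gamma> n *\<^sub>R G (x n) - pp n) (p' - pp n) \<le> \<gamma> n * fr p'"
      using vi_pp[of n] fp' unfolding vi_def by blast
    have eq: "inner (x n - \<gamma> n *\<^sub>R G (x n) - pp n) (p' - pp n) = \<gamma> n * inner (un n) (p' - pp n)"
      unfolding un_def using gpos[of n] by (simp add: inner_diff_left algebra_simps)
    have "\<gamma> n * (fr (pp n) + inner (un n) (p' - pp n)) \<le> \<gamma> n * fr p'"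
      using a2 unfolding eq by (simp add: algebra_simps)
    then have a3: "fr (pp n) + inner (un n) (p' - pp n) \<le> fr p'" using gpos[of n] by simp
    have "inner (u - un n) (p' - pp n) = - inner u (pp n - p') - inner (un n) (p' - pp n)"
      by (simp add: inner_diff_left inner_diff_right algebra_simps)
    then show ?thesis using a1 a3 by linarith
  qed
  have unc: "(\<lambda>n. un n) \<longlonglongrightarrow> - v"
  proof -
    have "(\<lambda>n. (1 / \<gamma> n) *\<^sub>R (x n - pp n)) \<longlonglongrightarrow> 0"
    proof (rule lim0_bound[where K="1 / \<epsilon>"])
      fix n
      have "norm ((1 / \<gamma> n) *\<^sub>R (x n - pp n)) = (1 / \<gamma> n) * norm (x n - pp n)" using gpos[of n] by simp
      also have "\<dots> \<le> (1 / \<epsilon>) * norm (x n - pp n)"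
        using gamma[of n] eps gpos[of n] by (intro mult_right_mono) (auto simp: frac_le)
      finally show "norm ((1 / \<gamma> n) *\<^sub>R (x n - pp n)) \<le> 1 / \<epsilon> * norm (pp n - x n)"
        by (simp add: norm_minus_commute)
      show "(\<lambda>n. norm (pp n - x n)) \<longlonglongrightarrow> 0" using px0 by (simp add: tendsto_norm_zero_iff)
    qed
    then have "(\<lambda>n. (1 / \<gamma> n) *\<^sub>R (x n - pp n) - G (x n)) \<longlonglongrightarrow> 0 - v" by (intro tendsto_diff Gv)
    then show ?thesis unfolding un_def by simp
  qed
  have lim: "(\<lambda>k. inner (u - un (r k)) (p' - pp (r k))) \<longlonglongrightarrow> inner (u + v) (p' - z)"
  proof -
    have ppr: "(\<lambda>k. inner (u + v) (pp (r k))) \<longlonglongrightarrow> inner (u + v) z"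
    proof -
      have pxr: "(\<lambda>k. pp (r k) - x (r k)) \<longlonglongrightarrow> 0" using LIMSEQ_subseq_LIMSEQ[OF px0 r] by (simp add: o_def)
      have "(\<lambda>k. inner (u + v) (x (r k)) + inner (u + v) (pp (r k) - x (r k))) \<longlonglongrightarrow> inner (u + v) z + inner (u + v) 0"
        by (intro tendsto_add wzr tendsto_inner tendsto_const pxr)
      then show ?thesis by (simp add: inner_diff_right)
    qed
    have sm: "(\<lambda>k. inner (un (r k) + v) (p' - pp (r k))) \<longlonglongrightarrow> 0"
    proof (rule lim0_bound[where K="norm p' + B + C"])
      fix k
      have np: "norm (p' - pp (r k)) \<le> norm p' + B + C"
      proof -
        have "pp (r k) = x (r k) + (pp (r k) - x (r k))" by simp
        then have "norm (pp (r k)) \<le> norm (x (r k)) + norm (pp (r k) - x (r k))" by (metis norm_triangle_ineq)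
        then have "norm (pp (r k)) \<le> B + C" using B[of "r k"] C[of "r k"] by linarith
        then show ?thesis using norm_triangle_ineq4[of p' "pp (r k)"] by linarith
      qed
      have "norm (inner (un (r k) + v) (p' - pp (r k))) \<le> norm (un (r k) + v) * norm (p' - pp (r k))"
        using Cauchy_Schwarz_ineq2 by simp
      also have "\<dots> \<le> norm (un (r k) + v) * (norm p' + B + C)" using np by (intro mult_left_mono) auto
      finally show "norm (inner (un (r k) + v) (p' - pp (r k))) \<le> (norm p' + B + C) * norm (un (r k) + v)"
        by (simp add: mult.commute)
      have "(\<lambda>k. un (r k)) \<longlonglongrightarrow> - v" using LIMSEQ_subseq_LIMSEQ[OF unc r] by (simp add: o_def)
      then have "(\<lambda>k. un (r k) + v) \<longlonglongrightarrow> - v + v" by (intro tendsto_add tendsto_const)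
      then show "(\<lambda>k. norm (un (r k) + v)) \<longlonglongrightarrow> 0" by (simp add: tendsto_norm_zero_iff)
    qed
    have "(\<lambda>k. (inner (u + v) p' - inner (u + v) (pp (r k))) - inner (un (r k) + v) (p' - pp (r k)))
           \<longlonglongrightarrow> (inner (u + v) p' - inner (u + v) z) - 0"
      by (intro tendsto_diff tendsto_const ppr sm)
    moreover have "\<And>k. (inner (u + v) p' - inner (u + v) (pp (r k))) - inner (un (r k) + v) (p' - pp (r k))
       = inner (u - un (r k)) (p' - pp (r k))"
      by (simp add: inner_diff_left inner_diff_right inner_add_left algebra_simps)
    ultimately show ?thesis by (simp add: inner_diff_right)
  qed
  have "0 \<le> inner (u + v) (p' - z)"
    by (rule LIMSEQ_le_const[OF lim]) (use mono in auto)
  moreover have "u + v = z - p'" unfolding u_def Gz by simp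
  ultimately have "0 \<le> inner (z - p') (p' - z)" by simp
  moreover have "inner (z - p') (p' - z) = - (norm (z - p'))\<^sup>2"
    by (metis inner_minus_right minus_diff_eq power2_norm_eq_inner)
  ultimately have "p' = z" by simp
  then have "vi f 1 (z - G z) z" using vp' by simp
  then show ?thesis by (rule vi_S)
qed

lemma part_iii: "\<exists>z\<in>S. weakly_converges x z"
proof -
  obtain B where B: "\<And>n. norm (x n) \<le> B" using x_bdd by blast
  show ?thesis
  proof (rule opial[OF B])
    fix z assume z: "z \<in> S"
    obtain l where "(\<lambda>n. norm (x n - z)) \<longlonglongrightarrow> l" using conv_dist[OF z] unfolding convergent_def by blast
    then have "(\<lambda>n. (norm (x n - z))\<^sup>2) \<longlonglongrightarrow> l\<^sup>2" by (intro tendsto_intros)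
    then show "convergent (\<lambda>n. (norm (x n - z))\<^sup>2)" unfolding convergent_def by blast
  next
    fix r z assume "strict_mono r" "weakly_converges (x \<circ> r) z"
    then show "z \<in> S" by (rule cluster_in_S)
  qed
qed

end


lemma weak_strong_unique:
  fixes x :: "nat \<Rightarrow> 'a::real_inner"
  assumes "x \<longlonglongrightarrow> L" "weakly_converges x z"
  shows "L = z"
proof -
  have "inner L y = inner z y" for y
  proof -
    have "(\<lambda>n. inner (x n) y) \<longlonglongrightarrow> inner L y" using assms(1) by (intro tendsto_intros)
    moreover have "(\<lambda>n. inner (x n) y) \<longlonglongrightarrow> inner z y" using assms(2) unfolding weakly_converges_def by blast
    ultimately show ?thesis using LIMSEQ_unique by blast
  qed
  then have "inner (L - z) (L - z) = 0" by (simp add: inner_diff_left)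
  then show ?thesis by simp
qed

lemma summable_diff_convergent:
  fixes x :: "nat \<Rightarrow> 'a::{real_normed_vector, complete_space}"
  assumes sm: "summable (\<lambda>n. norm (x (Suc n) - x n))"
  shows "convergent x"
proof -
  define t where "t n = (\<Sum>k<n. norm (x (Suc k) - x k))" for n
  have "convergent t" unfolding t_def using summable_LIMSEQ[OF sm] convergent_def by blast
  then have ct: "Cauchy t" by (rule convergent_Cauchy)
  have bd: "dist (x m) (x n) \<le> t m - t n" if nm: "n \<le> m" for m n
  proof -
    have "x m - x n = (\<Sum>k=n..<m. x (Suc k) - x k)" using sum_Suc_diff'[OF nm, of x] by simp
    then have "norm (x m - x n) \<le> (\<Sum>k=n..<m. norm (x (Suc k) - x k))" by (metis norm_sum)
    also have "\<dots> = t m - t n" unfolding t_def using nm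
      by (metis atLeast0LessThan sum_diff_nat_ivl zero_le)
    finally show ?thesis by (simp add: dist_norm)
  qed
  have "Cauchy x"
  proof (rule metric_CauchyI)
    fix e :: real assume e: "0 < e"
    obtain M where M: "\<And>m n. m \<ge> M \<Longrightarrow> n \<ge> M \<Longrightarrow> dist (t m) (t n) < e"
      using ct e unfolding Cauchy_def by blast
    show "\<exists>M. \<forall>m\<ge>M. \<forall>n\<ge>M. dist (x m) (x n) < e"
    proof (intro exI allI impI)
      fix m n assume mn: "M \<le> m" "M \<le> n"
      show "dist (x m) (x n) < e"
      proof (cases "n \<le> m")
        case True
        then show ?thesis using bd[OF True] M[OF mn] by (simp add: dist_real_def)
      next
        case False
        then have "m \<le> n" by simp
        then show ?thesis using bd[of m n] M[OF mn(2,1)] by (simp add: dist_real_def dist_commute)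
      qed
    qed
  qed
  then show ?thesis by (rule Cauchy_convergent)
qed

context fbs begin

definition "un n = (1 / \<gamma> n) *\<^sub>R (x n - pp n) - G (x n)"

lemma un_subdiff: "un n \<in> subdiff f (pp n)"
  unfolding subdiff_def
proof (intro CollectI allI)
  fix y
  show "ereal (inner (y - pp n) (un n)) + f (pp n) \<le> f y"
  proof (cases "f y = \<infinity>")
    case True then show ?thesis by simp
  next
    case False
    have fpp: "f (pp n) \<noteq> \<infinity>" using vi_pp[of n] unfolding vi_def by blast
    have a2: "\<gamma> n * fr (pp n) + inner (x n - \<gamma> n *\<^sub>R G (x n) - pp n) (y - pp n) \<le> \<gamma> n * fr y"
      using vi_pp[of n] False unfolding vi_def by blast
    have eq: "inner (x n - \<gamma> n *\<^sub>R G (x n) - pp n) (y - pp n) = \<gamma> n * inner (y - pp n) (un n)"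
      unfolding un_def using gpos[of n] by (simp add: inner_diff_left inner_commute algebra_simps)
    have "\<gamma> n * (fr (pp n) + inner (y - pp n) (un n)) \<le> \<gamma> n * fr y"
      using a2 unfolding eq by (simp add: algebra_simps)
    then have "inner (y - pp n) (un n) + fr (pp n) \<le> fr y" using gpos[of n] by simp
    then show ?thesis by (subst f_fin[OF pf fpp], subst f_fin[OF pf False]) simp
  qed
qed

lemma negG_subdiff: assumes z: "z \<in> S" shows "- G z \<in> subdiff f z"
  unfolding subdiff_def
proof (intro CollectI allI)
  fix y
  have fz: "f z \<noteq> \<infinity>" using S_vi[OF z] by blast
  show "ereal (inner (y - z) (- G z)) + f z \<le> f y"
  proof (cases "f y = \<infinity>")
    case True then show ?thesis by simp
  next
    case False
    have "fr z - inner (G z) (y - z) \<le> fr y" using S_vi[OF z] False by blast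
    then have "inner (y - z) (- G z) + fr z \<le> fr y" by (simp add: inner_commute)
    then show ?thesis by (subst f_fin[OF pf fz], subst f_fin[OF pf False]) simp
  qed
qed

lemma un_conv: assumes z: "z \<in> S" shows "un \<longlonglongrightarrow> - G z"
proof -
  have "(\<lambda>n. (1 / \<gamma> n) *\<^sub>R (x n - pp n)) \<longlonglongrightarrow> 0"
  proof (rule lim0_bound[where K="1 / \<epsilon>"])
    fix n
    have "norm ((1 / \<gamma> n) *\<^sub>R (x n - pp n)) = (1 / \<gamma> n) * norm (x n - pp n)" using gpos[of n] by simp
    also have "\<dots> \<le> (1 / \<epsilon>) * norm (x n - pp n)"
      using gamma[of n] eps gpos[of n] by (intro mult_right_mono) (auto simp: frac_le)
    finally show "norm ((1 / \<gamma> n) *\<^sub>R (x n - pp n)) \<le> 1 / \<epsilon> * norm (pp n - x n)"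
      by (simp add: norm_minus_commute)
    show "(\<lambda>n. norm (pp n - x n)) \<longlonglongrightarrow> 0" using px0 by (simp add: tendsto_norm_zero_iff)
  qed
  then have "(\<lambda>n. (1 / \<gamma> n) *\<^sub>R (x n - pp n) - G (x n)) \<longlonglongrightarrow> 0 - G z" by (intro tendsto_diff Gconv[OF z])
  then show ?thesis unfolding un_def[abs_def] by simp
qed

lemma pp_weak: assumes "weakly_converges x z" shows "weakly_converges pp z"
  unfolding weakly_converges_def
proof
  fix y
  have h1: "(\<lambda>n. inner (x n) y) \<longlonglongrightarrow> inner z y" using assms unfolding weakly_converges_def by blast
  have h2: "(\<lambda>n. inner (pp n - x n) y) \<longlonglongrightarrow> inner 0 y" by (intro tendsto_inner px0 tendsto_const)
  have "(\<lambda>n. inner (x n) y + inner (pp n - x n) y) \<longlonglongrightarrow> inner z y + inner 0 y" using h1 h2 by (rule tendsto_add)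
  then show "(\<lambda>n. inner (pp n) y) \<longlonglongrightarrow> inner z y" by (simp add: inner_diff_left)
qed

lemma interior_case:
  assumes int: "interior S \<noteq> {}"
  shows "convergent x"
proof -
  obtain w where w: "w \<in> interior S" using int by blast
  obtain \<rho> where \<rho>: "\<rho> > 0" "ball w \<rho> \<subseteq> S" using w mem_interior by blast
  have wS: "w \<in> S" using \<rho> by auto
  obtain M where M: "\<And>n. norm (x n - w) \<le> M" using bdd_dist[OF wS] by blast
  have M0: "0 \<le> M" using M[of 0] norm_ge_zero order_trans by blast
  define d where "d n = x (Suc n) - x n" for n
  define e' where "e' n = 2 * (M + \<rho>) * err n + (err n)\<^sup>2" for n
  have key: "\<rho> * norm (d n) \<le> (norm (x n - w))\<^sup>2 - (norm (x (Suc n) - w))\<^sup>2 + e' n" for n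
  proof (cases "d n = 0")
    case True
    then have "x (Suc n) = x n" unfolding d_def by simp
    moreover have "0 \<le> e' n" unfolding e'_def using M0 err_nonneg[of n] \<rho> by (intro add_nonneg_nonneg mult_nonneg_nonneg) auto
    ultimately show ?thesis using True by simp
  next
    case False
    define s where "s = (\<rho> / 2) / norm (d n)"
    have dn: "0 < norm (d n)" using False by simp
    define z' where "z' = w - s *\<^sub>R d n"
    have "norm (z' - w) = \<rho> / 2" unfolding z'_def s_def using dn \<rho> by simp
    then have "z' \<in> ball w \<rho>" using \<rho> by (simp add: dist_norm norm_minus_commute)
    then have z'S: "z' \<in> S" using \<rho> by auto
    have bz: "norm (x n - z') \<le> M + \<rho>"
    proof -
      have "norm (x n - z') \<le> norm (x n - w) + norm (w - z')"
        using norm_triangle_ineq[of "x n - w" "w - z'"] by simp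
      also have "norm (w - z') = \<rho> / 2" using \<open>norm (z' - w) = \<rho> / 2\<close> by (simp add: norm_minus_commute)
      finally show ?thesis using M[of n] \<rho> by linarith
    qed
    have sq: "(norm (x (Suc n) - z'))\<^sup>2 \<le> (norm (x n - z'))\<^sup>2 + 2 * (M + \<rho>) * err n + (err n)\<^sup>2"
      by (rule aux_sq[OF norm_ge_zero order_refl bz err_nonneg step_bd[OF z'S] norm_ge_zero])
    have E1: "(norm (x (Suc n) - z'))\<^sup>2 = (norm (x n - z'))\<^sup>2 + 2 * inner (x n - z') (d n) + (norm (d n))\<^sup>2"
    proof -
      have e: "x (Suc n) - z' = (x n - z') + d n" unfolding d_def by simp
      show ?thesis unfolding e by (rule norm_add_sq)
    qed
    have E2: "(norm (x (Suc n) - w))\<^sup>2 = (norm (x n - w))\<^sup>2 + 2 * inner (x n - w) (d n) + (norm (d n))\<^sup>2"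
    proof -
      have e: "x (Suc n) - w = (x n - w) + d n" unfolding d_def by simp
      show ?thesis unfolding e by (rule norm_add_sq)
    qed
    have E3: "inner (x n - z') (d n) = inner (x n - w) (d n) + (\<rho> / 2) * norm (d n)"
    proof -
      have e: "x n - z' = (x n - w) + s *\<^sub>R d n" unfolding z'_def by simp
      have "inner (x n - z') (d n) = inner (x n - w) (d n) + s * (norm (d n))\<^sup>2"
        unfolding e by (simp add: inner_add_left power2_norm_eq_inner)
      moreover have "s * (norm (d n))\<^sup>2 = (\<rho> / 2) * norm (d n)" unfolding s_def using dn by (simp add: power2_eq_square)
      ultimately show ?thesis by simp
    qed
    show ?thesis using sq E1 E2 E3 unfolding e'_def by linarith
  qed
  have sumd: "summable (\<lambda>n. \<rho> * norm (d n))"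
  proof (rule telescope_summable[where a="\<lambda>n. (norm (x n - w))\<^sup>2" and d=e'])
    show "\<And>n. 0 \<le> (norm (x n - w))\<^sup>2" by simp
    show "\<And>n. 0 \<le> \<rho> * norm (d n)" using \<rho> by simp
    show "\<And>n. 0 \<le> e' n" unfolding e'_def using M0 err_nonneg \<rho> by (intro add_nonneg_nonneg mult_nonneg_nonneg) auto
    show "summable e'" unfolding e'_def using err_sum err2_sum by (intro summable_add summable_mult)
    fix n show "(norm (x (Suc n) - w))\<^sup>2 \<le> (norm (x n - w))\<^sup>2 - \<rho> * norm (d n) + e' n" using key[of n] by linarith
  qed
  have "summable (\<lambda>n. (1 / \<rho>) * (\<rho> * norm (d n)))" using sumd by (rule summable_mult)
  then have "summable (\<lambda>n. norm (d n))" using \<rho> by simp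
  then show ?thesis unfolding d_def by (rule summable_diff_convergent)
qed

lemma part_iv:
  assumes "(\<forall>z\<in>S. demiregular_at (subdiff f) z) \<or> (\<forall>z\<in>S. demiregular_at (\<lambda>y. {G y}) z) \<or> interior S \<noteq> {}"
  shows "\<exists>z\<in>S. x \<longlonglongrightarrow> z"
proof -
  obtain z where z: "z \<in> S" and wz: "weakly_converges x z" using part_iii by blast
  have "x \<longlonglongrightarrow> z" using assms
  proof (elim disjE)
    assume "\<forall>z\<in>S. demiregular_at (subdiff f) z"
    then have dr: "demiregular_at (subdiff f) z" using z by blast
    have "pp \<longlonglongrightarrow> z"
      using dr un_subdiff negG_subdiff[OF z] pp_weak[OF wz] un_conv[OF z]
      unfolding demiregular_at_def by blast
    then have "(\<lambda>n. pp n - (pp n - x n)) \<longlonglongrightarrow> z - 0" by (intro tendsto_diff px0)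
    then show "x \<longlonglongrightarrow> z" by simp
  next
    assume "\<forall>z\<in>S. demiregular_at (\<lambda>y. {G y}) z"
    then have dr: "demiregular_at (\<lambda>y. {G y}) z" using z by blast
    have H: "(\<forall>n. G (x n) \<in> {G (x n)}) \<and> G z \<in> {G z} \<and> weakly_converges x z \<and> (\<lambda>n. G (x n)) \<longlonglongrightarrow> G z \<longrightarrow> x \<longlonglongrightarrow> z"
      using dr[unfolded demiregular_at_def, THEN conjunct2, THEN spec[of _ x], THEN spec[of _ "\<lambda>n. G (x n)"], THEN spec[of _ "G z"]] .
    show "x \<longlonglongrightarrow> z" using H wz Gconv[OF z] by blast
  next
    assume "interior S \<noteq> {}"
    then obtain L where "x \<longlonglongrightarrow> L" using interior_case unfolding convergent_def by blast
    moreover then have "L = z" using wz by (rule weak_strong_unique)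
    ultimately show "x \<longlonglongrightarrow> z" by simp
  qed
  then show ?thesis using z by blast
qed

end

theorem proposition4p7:
  fixes f :: "'a::{real_inner, complete_space} \<Rightarrow> ereal"
    and g :: "'a \<Rightarrow> real" and G :: "'a \<Rightarrow> 'a"
    and \<beta> \<epsilon> :: real and x0 :: 'a
    and \<gamma> lam :: "nat \<Rightarrow> real" and a b x :: "nat \<Rightarrow> 'a"
    and S :: "'a set"
  assumes beta: "0 < \<beta>"
    and eps: "0 < \<epsilon>" "\<epsilon> < min (1/2) \<beta>"
    and f: "proper_fun f" "lsc_fun f" "convex_fun f"
    and g_convex: "convex_on UNIV g"
    and g_grad: "\<And>y. (g has_derivative (\<lambda>h. inner (G y) h)) (at y)"
    and G_lip: "\<And>y z. norm (G y - G z) \<le> (1 / \<beta>) * norm (y - z)"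
    and S_def: "S = {z. \<forall>y. f z + ereal (g z) \<le> f y + ereal (g y)}"
    and S_ne: "S \<noteq> {}"
    and gamma: "\<And>n. \<epsilon> \<le> \<gamma> n \<and> \<gamma> n \<le> 2 * \<beta> / (1 + \<epsilon>)"
    and a_sum: "summable (\<lambda>n. norm (a n))"
    and b_sum: "summable (\<lambda>n. norm (b n))"
    and lam_bd: "\<And>n. \<epsilon> \<le> lam n \<and> lam n \<le> (1 - \<epsilon>) * (2 + \<epsilon> - \<gamma> n / (2 * \<beta>))"
    and x_0: "x 0 = x0"
    and x_rec: "\<And>n. x (Suc n) = x n + lam n *\<^sub>R
        (prox (\<lambda>y. ereal (\<gamma> n) * f y) (x n - \<gamma> n *\<^sub>R (G (x n) + b n)) + a n - x n)"
  shows "summable (\<lambda>n. (norm (prox (\<lambda>y. ereal (\<gamma> n) * f y) (x n - \<gamma> n *\<^sub>R G (x n)) - x n))\<^sup>2)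
     \<and> (\<forall>z\<in>S. summable (\<lambda>n. (norm (G (x n) - G z))\<^sup>2))
     \<and> (\<exists>z\<in>S. weakly_converges x z)
     \<and> ((\<forall>z\<in>S. demiregular_at (subdiff f) z) \<or> (\<forall>z\<in>S. demiregular_at (\<lambda>y. {G y}) z)
           \<or> interior S \<noteq> {} \<longrightarrow> (\<exists>z\<in>S. x \<longlonglongrightarrow> z))"
proof -
  interpret fbs f g G \<beta> \<epsilon> \<gamma> lam a b x S
    by (rule fbs.intro[OF beta eps f g_convex g_grad G_lip S_def S_ne gamma a_sum b_sum lam_bd x_rec])
  have i: "summable (\<lambda>n. (norm (prox (\<lambda>y. ereal (\<gamma> n) * f y) (x n - \<gamma> n *\<^sub>R G (x n)) - x n))\<^sup>2)"
    using part_i unfolding pp_def .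
  have ii: "\<forall>z\<in>S. summable (\<lambda>n. (norm (G (x n) - G z))\<^sup>2)" using part_ii by blast
  show ?thesis using i ii part_iii part_iv by blast
qed

end
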